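(* Let $P\subset\mathbb{R}^d$ be a full-dimensional lattice polytope with facet presentation $P=\{x: n_F(x)\ge -h_F \ \forall F\in\mathcal{F}(P)\}$ and codegree $a$. Then: (1) $\lfloor aP\rfloor \subseteq \{x\in\mathbb{R}^d : n_F(x)\ge 1-ah_F \text{ for all } F\in\mathcal{F}(P)\}$; (2) $\{P\}\subseteq \{x\in\mathbb{R}^d: n_F(x)\ge (a-1)h_F-1 \text{ for all } F\in\mathcal{F}(P)\}$; (3) if $P$ is nearly Gorenstein, then $P\cap\mathbb{Z}^d = (\lfloor aP\rfloor\cap\mathbb{Z}^d) + (\{P\}\cap\mathbb{Z}^d)$; (4) if $P$ has the integer decomposition property and $P\cap\mathbb{Z}^d = (\lfloor aP\rfloor\cap\mathbb{Z}^d) + (\{P\}\cap\mathbb{Z}^d)$, then $P$ is nearly Gorenstein.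
   Context: $\mathbf{k}$ is an infinite field. $\mathcal{F}(P)$ is the set of facets of $P$; $n_F\in(\mathbb{Z}^d)^*$ is the primitive inner normal of $F$ and $h_F\in\mathbb{Z}$. The codegree is $a=\min\{k\in\mathbb{Z}_{\ge1}: \mathrm{int}(kP)\cap\mathbb{Z}^d\ne\varnothing\}$. For a lattice polytope $Q$, the floor polytope is $\lfloor Q\rfloor=\mathrm{conv}(\mathrm{int}(Q)\cap\mathbb{Z}^d)$. The remainder polytope of $P$ is $\{P\}=\mathrm{conv}\{x\in\mathbb{Z}^d: n_F(x)\ge (a-1)h_F-1\ \forall F\in\mathcal{F}(P)\}$. The Ehrhart ring is $A(P)=\mathbf{k}[\mathbf{t}^xs^k: k\in\mathbb{N}, x\in kP\cap\mathbb{Z}^d]$ graded by $k$, with graded maximal ideal $\mathbf{m}$ and canonical module $\omega$; $P$ is nearly Gorenstein if $\mathbf{m}\subseteq\mathrm{tr}(\omega)=\sum_{\phi\in\mathrm{Hom}(\omega,A(P))}\phi(\omega)$. $P$ has the integer decomposition property if for every $k\ge1$ every lattice point of $kP$ is a sum of $k$ lattice points of $P$. *)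

theory Defs
  imports "HOL-Analysis.Analysis" "HOL-Library.Poly_Mapping"
begin

definition lattice_pts :: "(real^'n) set" where
  "lattice_pts = {x. \<forall>i. x $ i \<in> \<int>}"

definition rvec :: "int^'n \<Rightarrow> real^'n" where
  "rvec u = (\<chi> i. real_of_int (u $ i))"

definition lattice_polytope :: "(real^'n) set \<Rightarrow> bool" where
  "lattice_polytope P \<longleftrightarrow> (\<exists>S. finite S \<and> S \<subseteq> lattice_pts \<and> P = convex hull S)"

definition lfun :: "int^'n \<Rightarrow> real^'n \<Rightarrow> real" where
  "lfun u x = (\<Sum>i\<in>UNIV. real_of_int (u $ i) * x $ i)"

definition is_prim_inner_normal :: "(real^'n) set \<Rightarrow> (real^'n) set \<Rightarrow> int^'n \<Rightarrow> bool" where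
  "is_prim_inner_normal P F u \<longleftrightarrow>
     Gcd ((\<lambda>i. u $ i) ` UNIV) = 1 \<and>
     (\<exists>c. (\<forall>x\<in>P. c \<le> lfun u x) \<and> F = {x\<in>P. lfun u x = c})"

definition nF :: "(real^'n) set \<Rightarrow> (real^'n) set \<Rightarrow> int^'n" where
  "nF P F = (THE u. is_prim_inner_normal P F u)"

text \<open>h_F such that P = {x. n_F(x) >= - h_F for all facets F}.\<close>
definition hF :: "(real^'n) set \<Rightarrow> (real^'n) set \<Rightarrow> real" where
  "hF P F = - (INF x\<in>P. lfun (nF P F) x)"

definition codegree :: "(real^'n) set \<Rightarrow> nat" where
  "codegree P = (LEAST k::nat. 1 \<le> k \<and> interior ((\<lambda>v. real k *\<^sub>R v) ` P) \<inter> lattice_pts \<noteq> {})"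

definition floor_poly :: "(real^'n) set \<Rightarrow> (real^'n) set" where
  "floor_poly Q = convex hull (interior Q \<inter> lattice_pts)"

definition remainder_poly :: "(real^'n) set \<Rightarrow> (real^'n) set" where
  "remainder_poly P = convex hull {x\<in>lattice_pts. \<forall>F. F facet_of P \<longrightarrow>
      lfun (nF P F) x \<ge> (real (codegree P) - 1) * hF P F - 1}"

definition IDP :: "(real^'n) set \<Rightarrow> bool" where
  "IDP P \<longleftrightarrow> (\<forall>k::nat. 1 \<le> k \<longrightarrow> (\<forall>x\<in>(\<lambda>v. real k *\<^sub>R v) ` P \<inter> lattice_pts.
      \<exists>xs. length xs = k \<and> set xs \<subseteq> P \<inter> lattice_pts \<and> sum_list xs = x))"

text \<open>The monomial t^x s^k is the exponent (x,k). Elements of k[Z^d x N] are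
  finitely supported functions (poly_mapping) with convolution product.\<close>

definition cone_pts :: "(real^'n) set \<Rightarrow> ((int^'n) \<times> nat) set" where
  "cone_pts P = {(x,k). rvec x \<in> (\<lambda>v. real k *\<^sub>R v) ` P}"

definition int_cone_pts :: "(real^'n) set \<Rightarrow> ((int^'n) \<times> nat) set" where
  "int_cone_pts P = {(x,k). 1 \<le> k \<and> rvec x \<in> interior ((\<lambda>v. real k *\<^sub>R v) ` P)}"

definition ehrhart_ring :: "'k itself \<Rightarrow> (real^'n) set \<Rightarrow> (((int^'n) \<times> nat) \<Rightarrow>\<^sub>0 'k::field) set" where
  "ehrhart_ring _ P = {f. Poly_Mapping.keys f \<subseteq> cone_pts P}"

definition max_ideal :: "'k itself \<Rightarrow> (real^'n) set \<Rightarrow> (((int^'n) \<times> nat) \<Rightarrow>\<^sub>0 'k::field) set" where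
  "max_ideal _ P = {f. Poly_Mapping.keys f \<subseteq> cone_pts P \<and> Poly_Mapping.lookup f (0,0) = 0}"

text \<open>Canonical module, realised (Danilov-Stanley) as the ideal spanned by
  the monomials in the interior of the cone.\<close>
definition canonical_module :: "'k itself \<Rightarrow> (real^'n) set \<Rightarrow> (((int^'n) \<times> nat) \<Rightarrow>\<^sub>0 'k::field) set" where
  "canonical_module _ P = {f. Poly_Mapping.keys f \<subseteq> int_cone_pts P}"

definition hom_omega :: "'k itself \<Rightarrow> (real^'n) set \<Rightarrow>
   ((((int^'n) \<times> nat) \<Rightarrow>\<^sub>0 'k::field) \<Rightarrow> (((int^'n) \<times> nat) \<Rightarrow>\<^sub>0 'k)) set" where
  "hom_omega K P = {\<phi>.
      (\<forall>w\<in>canonical_module K P. \<phi> w \<in> ehrhart_ring K P) \<and>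
      (\<forall>v\<in>canonical_module K P. \<forall>w\<in>canonical_module K P. \<phi> (v + w) = \<phi> v + \<phi> w) \<and>
      (\<forall>r\<in>ehrhart_ring K P. \<forall>w\<in>canonical_module K P. \<phi> (r * w) = r * \<phi> w)}"

definition trace_omega :: "'k itself \<Rightarrow> (real^'n) set \<Rightarrow> (((int^'n) \<times> nat) \<Rightarrow>\<^sub>0 'k::field) set" where
  "trace_omega K P = {sum_list (map (\<lambda>(\<phi>, w). \<phi> w) l) | l.
      set l \<subseteq> hom_omega K P \<times> canonical_module K P}"

definition nearly_gorenstein :: "'k::field itself \<Rightarrow> (real^'n) set \<Rightarrow> bool" where
  "nearly_gorenstein K P \<longleftrightarrow> max_ideal K P \<subseteq> trace_omega K P"

end

theory Submission
  imports Defs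
begin


lemma lfun_inner: "lfun u x = rvec u \<bullet> x"
  by (simp add: lfun_def rvec_def inner_vec_def)

lemma parallel_normal:
  fixes a c :: "'a::euclidean_space"
  assumes "a \<noteq> 0" "\<And>y. a \<bullet> y = 0 \<Longrightarrow> c \<bullet> y = 0"
  shows "c = ((c \<bullet> a) / (a \<bullet> a)) *\<^sub>R a"
proof -
  define t where "t = (c \<bullet> a) / (a \<bullet> a)"
  define v where "v = c - t *\<^sub>R a"
  have aa: "a \<bullet> a \<noteq> 0" using assms by simp
  have av: "a \<bullet> v = 0" using aa by (simp add: v_def t_def inner_diff_right inner_commute)
  hence "c \<bullet> v = 0" using assms(2) by blast
  hence "v \<bullet> v = 0" by (simp add: v_def inner_diff_left av[unfolded v_def])
  thus ?thesis by (simp add: v_def t_def)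
qed

lemma interior_strict:
  fixes a :: "'a::euclidean_space"
  assumes "p \<in> interior S" "S \<subseteq> {x. a \<bullet> x \<le> b}" "a \<noteq> 0"
  shows "a \<bullet> p < b"
proof -
  obtain e where e: "e > 0" "ball p e \<subseteq> S" using assms(1) by (meson mem_interior)
  define q where "q = p + (e / 2 / norm a) *\<^sub>R a"
  have "dist p q < e" using e assms(3) by (simp add: q_def dist_norm)
  hence "q \<in> S" using e by auto
  hence "a \<bullet> q \<le> b" using assms(2) by auto
  moreover have "a \<bullet> q = a \<bullet> p + e / 2 * norm a"
    using assms(3) by (simp add: q_def inner_add_right power2_norm_eq_inner[symmetric] power2_eq_square)
  moreover have "e / 2 * norm a > 0" using e assms(3) by simp
  ultimately show ?thesis by linarith
qed

lemma facet_normal_unique: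
  fixes S :: "'a::euclidean_space set"
  assumes "interior S \<noteq> {}" "C facet_of S"
    "a \<noteq> 0" "S \<subseteq> {x. a \<bullet> x \<le> b}" "C = S \<inter> {x. a \<bullet> x = b}"
    "a' \<noteq> 0" "S \<subseteq> {x. a' \<bullet> x \<le> b'}" "C = S \<inter> {x. a' \<bullet> x = b'}"
  shows "\<exists>l>0. a' = l *\<^sub>R a \<and> b' = l * b"
proof -
  have dS: "aff_dim S = DIM('a)" using assms(1) aff_dim_nonempty_interior by blast
  have dC: "aff_dim C = DIM('a) - 1" and Cne: "C \<noteq> {}"
    using assms(2) dS by (auto simp: facet_of_def)
  have hyp: "affine hull C = {x. a \<bullet> x = b}"
  proof (rule affine_dim_equal)
    show "affine (affine hull C)" by simp
    show "affine {x. a \<bullet> x = b}" by (simp add: affine_hyperplane)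
    show "affine hull C \<subseteq> {x. a \<bullet> x = b}"
      by (rule hull_minimal) (use assms(5) affine_hyperplane in auto)
    show "affine hull C \<noteq> {}" using Cne by simp
    show "aff_dim (affine hull C) = aff_dim {x. a \<bullet> x = b}"
      using dC assms(3) by (simp add: aff_dim_hyperplane)
  qed
  have hyp2: "affine hull C \<subseteq> {x. a' \<bullet> x = b'}"
    by (rule hull_minimal) (use assms(8) affine_hyperplane in auto)
  obtain x0 where x0: "x0 \<in> C" using Cne by auto
  have ax0: "a \<bullet> x0 = b" "a' \<bullet> x0 = b'" using x0 assms(5,8) by auto
  have "a' \<bullet> y = 0" if "a \<bullet> y = 0" for y
  proof -
    have "x0 + y \<in> affine hull C" using hyp that ax0 by (simp add: inner_add_right)
    hence "a' \<bullet> (x0 + y) = b'" using hyp2 by auto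
    thus ?thesis using ax0 by (simp add: inner_add_right)
  qed
  then have eq: "a' = ((a' \<bullet> a) / (a \<bullet> a)) *\<^sub>R a" using parallel_normal assms(3) by blast
  define t where "t = (a' \<bullet> a) / (a \<bullet> a)"
  have eq': "a' = t *\<^sub>R a" using eq t_def by simp
  have bb: "b' = t * b" using ax0 eq' by simp
  obtain p where p: "p \<in> interior S" using assms(1) by auto
  have "a \<bullet> p < b" using interior_strict[OF p assms(4,3)] .
  moreover have "a' \<bullet> p < b'" using interior_strict[OF p assms(7,6)] .
  ultimately have "t * (b - a \<bullet> p) > 0" "b - a \<bullet> p > 0" using eq' bb by (simp_all add: algebra_simps)
  hence "t > 0" by (simp add: zero_less_mult_iff)
  thus ?thesis using eq' bb by blast
qed



lemma int_orth_vector: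
  fixes a :: "real^'n" and B :: "(real^'n) set"
  assumes indB: "independent B" and cB: "card B = CARD('n) - 1"
    and aB: "\<forall>w\<in>B. a \<bullet> w = 0" and a0: "a \<noteq> 0" and iB: "\<forall>w\<in>B. \<forall>i. w$i \<in> \<int>"
  shows "\<exists>c. c \<noteq> 0 \<and> (\<forall>i. c$i \<in> \<int>) \<and> (\<forall>w\<in>B. c \<bullet> w = 0)"
proof -
  obtain i0 :: 'n where True by blast
  have finB: "finite B" using indB independent_bound by blast
  have "card (UNIV - {i0}) = card B" using cB by (simp add: card_Diff_singleton)
  then obtain \<sigma> where \<sigma>: "bij_betw \<sigma> (UNIV - {i0}) B"
    using finB finite_same_card_bij by (metis finite_Diff finite_class.finite_UNIV)
  define M where "M y = (\<chi> i. if i = i0 then y else \<sigma> i)" for y :: "real^'n"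
  define c where "c = (\<chi> k. det (M (axis k 1)))"
  have lin: "det (M y) = c \<bullet> y" for y
  proof -
    have "det (M y) = det ((\<chi> i. if i = i0 then (\<Sum>k\<in>UNIV. (y$k) *s axis k 1) else \<sigma> i) :: real^'n^'n)"
      by (simp only: M_def basis_expansion)
    also have "\<dots> = (\<Sum>k\<in>UNIV. det ((\<chi> i. if i = i0 then (y$k) *s axis k (1::real) else \<sigma> i) :: real^'n^'n))"
      by (rule det_linear_row_sum) simp
    also have "\<dots> = (\<Sum>k\<in>UNIV. y$k * det (M (axis k 1)))"
      by (rule sum.cong) (simp_all add: M_def det_row_mul)
    also have "\<dots> = c \<bullet> y" by (simp add: c_def inner_vec_def mult.commute)
    finally show ?thesis .
  qed
  have "c$k \<in> \<int>" for k
  proof -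
    have ent: "M (axis k 1) $ i $ j \<in> \<int>" for i j
    proof (cases "i = i0")
      case True thus ?thesis by (simp add: M_def axis_def)
    next
      case False
      hence "\<sigma> i \<in> B" using \<sigma> by (auto simp: bij_betw_def)
      thus ?thesis using False iB by (simp add: M_def)
    qed
    show ?thesis unfolding c_def det_def vec_lambda_beta
      by (rule Ints_sum, rule Ints_mult, rule Ints_of_int, rule Ints_prod, rule ent)
  qed
  moreover have "c \<bullet> w = 0" if "w \<in> B" for w
  proof -
    have "w \<in> \<sigma> ` (UNIV - {i0})" using bij_betw_imp_surj_on[OF \<sigma>] that by simp
    then obtain j where j: "j \<in> UNIV - {i0}" "\<sigma> j = w" by blast
    have r: "row i0 (M w) = row j (M w)" using j by (simp add: M_def row_def)
    have "det (M w) = 0"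
      by (rule det_identical_rows[of i0 j, OF _ r]) (use j in auto)
    thus ?thesis using lin by simp
  qed
  moreover have "c \<noteq> 0"
  proof
    assume "c = 0"
    hence d0: "det (M a) = 0" using lin by simp
    let ?f = "\<lambda>z. transpose (M a) *v z"
    have "det (matrix ?f) \<noteq> 0"
    proof (subst det_nz_iff_inj)
      show "linear ?f" by (rule matrix_vector_mul_linear)
      show "inj ?f"
      proof (subst linear_injective_0)
        show "linear ?f" by (rule matrix_vector_mul_linear)
        show "\<forall>z. ?f z = 0 \<longrightarrow> z = 0"
        proof (intro allI impI)
          fix z assume z0: "?f z = 0"
          have expand: "?f z = (\<Sum>i\<in>UNIV. z$i *\<^sub>R (M a)$i)"
            by (simp add: vec_eq_iff matrix_vector_mult_def transpose_def mult.commute)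
          have split: "(\<Sum>i\<in>UNIV. z$i *\<^sub>R (M a)$i) = z$i0 *\<^sub>R a + (\<Sum>i\<in>UNIV - {i0}. z$i *\<^sub>R \<sigma> i)"
            by (subst sum.remove[of _ i0]) (auto simp: M_def intro!: sum.cong)
          have s0: "z$i0 *\<^sub>R a + (\<Sum>i\<in>UNIV - {i0}. z$i *\<^sub>R \<sigma> i) = 0" using z0 expand split by simp
          have "a \<bullet> (\<Sum>i\<in>UNIV - {i0}. z$i *\<^sub>R \<sigma> i) = 0"
            using \<sigma> aB by (auto simp: inner_sum_right bij_betw_def intro!: sum.neutral)
          hence "a \<bullet> (z$i0 *\<^sub>R a) = 0" using s0
            by (metis add.right_neutral inner_add_right inner_zero_right)
          hence zi0: "z$i0 = 0" using a0 by simp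
          hence s1: "(\<Sum>i\<in>UNIV - {i0}. z$i *\<^sub>R \<sigma> i) = 0" using s0 by simp
          define inv\<sigma> where "inv\<sigma> = the_inv_into (UNIV - {i0}) \<sigma>"
          have "(\<Sum>w\<in>B. z$(inv\<sigma> w) *\<^sub>R w) = (\<Sum>i\<in>UNIV - {i0}. z$i *\<^sub>R \<sigma> i)"
          proof -
            have "(\<Sum>w\<in>B. z$(inv\<sigma> w) *\<^sub>R w) = (\<Sum>i\<in>UNIV - {i0}. z$(inv\<sigma> (\<sigma> i)) *\<^sub>R \<sigma> i)"
            proof -
              have inj: "inj_on \<sigma> (UNIV - {i0})" and img: "\<sigma> ` (UNIV - {i0}) = B"
                using \<sigma> by (auto simp: bij_betw_def)
              show ?thesis unfolding img[symmetric] by (simp add: sum.reindex[OF inj])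
            qed
            also have "\<dots> = (\<Sum>i\<in>UNIV - {i0}. z$i *\<^sub>R \<sigma> i)"
              using \<sigma> by (intro sum.cong) (auto simp: inv\<sigma>_def bij_betw_def the_inv_into_f_f)
            finally show ?thesis .
          qed
          hence zs: "(\<Sum>w\<in>B. z$(inv\<sigma> w) *\<^sub>R w) = 0" using s1 by simp
          have H: "\<forall>c. (\<Sum>v\<in>B. c v *\<^sub>R v) = 0 \<longrightarrow> (\<forall>v\<in>B. c v = 0)"
            using indB independent_explicit[of B] by (simp add: scalar_mult_eq_scaleR)
          have "\<forall>w\<in>B. z$(inv\<sigma> w) = 0" using H[rule_format, of "\<lambda>w. z$(inv\<sigma> w)"] zs by simp
          hence "z$i = 0" if "i \<in> UNIV - {i0}" for i
            using \<sigma> that by (auto simp: inv\<sigma>_def bij_betw_def the_inv_into_f_f)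
          with zi0 show "z = 0" unfolding vec_eq_iff by (metis DiffI UNIV_I singletonD zero_index)
        qed
      qed
    qed
    hence "det (transpose (M a)) \<noteq> 0" by (metis matrix_of_matrix_vector_mul)
    thus False using d0 by simp
  qed
  ultimately show ?thesis by blast
qed



lemma facet_affine_hull:
  fixes S :: "'a::euclidean_space set"
  assumes "interior S \<noteq> {}" "C facet_of S" "a \<noteq> 0" "C = S \<inter> {x. a \<bullet> x = b}"
  shows "affine hull C = {x. a \<bullet> x = b}"
proof -
  have dS: "aff_dim S = DIM('a)" using assms(1) aff_dim_nonempty_interior by blast
  have dC: "aff_dim C = DIM('a) - 1" and Cne: "C \<noteq> {}"
    using assms(2) dS by (auto simp: facet_of_def)
  show ?thesis
  proof (rule affine_dim_equal)
    show "affine (affine hull C)" by simp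
    show "affine {x. a \<bullet> x = b}" by (simp add: affine_hyperplane)
    show "affine hull C \<subseteq> {x. a \<bullet> x = b}"
      by (rule hull_minimal) (use assms(4) affine_hyperplane in auto)
    show "affine hull C \<noteq> {}" using Cne by simp
    show "aff_dim (affine hull C) = aff_dim {x. a \<bullet> x = b}"
      using dC assms(3) by (simp add: aff_dim_hyperplane)
  qed
qed

lemma rvec_inj: "rvec u = rvec v \<longleftrightarrow> u = v"
  by (auto simp: rvec_def vec_eq_iff)

lemma rvec_nth [simp]: "rvec u $ i = real_of_int (u $ i)"
  by (simp add: rvec_def)

lemma rvec_zero_iff: "rvec u = 0 \<longleftrightarrow> u = 0"
  by (auto simp: rvec_def vec_eq_iff)

lemma Gcd_vec_one_nonzero:
  fixes u :: "int^'n"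
  assumes "Gcd ((\<lambda>i. u $ i) ` UNIV) = 1"
  shows "u \<noteq> 0"
  using assms by (auto simp: image_def)

locale latpoly =
  fixes P :: "(real^'n) set"
  assumes lp: "lattice_polytope P" and intP: "interior P \<noteq> {}"
begin

definition S0 where "S0 = (SOME S. finite S \<and> S \<subseteq> lattice_pts \<and> P = convex hull S)"

lemma S0: "finite S0" "S0 \<subseteq> lattice_pts" "P = convex hull S0"
proof -
  have "\<exists>S. finite S \<and> S \<subseteq> lattice_pts \<and> P = convex hull S" using lp by (simp add: lattice_polytope_def)
  from someI_ex[OF this] show "finite S0" "S0 \<subseteq> lattice_pts" "P = convex hull S0"
    unfolding S0_def by auto
qed

lemma polytopeP: "polytope P" using S0 by (auto simp: polytope_def)
lemma compactP: "compact P" using polytopeP polytope_imp_compact by blast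
lemma convexP: "convex P" using polytopeP polytope_imp_convex by blast
lemma polyhedronP: "polyhedron P" using polytopeP polytope_imp_polyhedron by blast
lemma P_ne: "P \<noteq> {}" using intP interior_subset by blast
lemma finite_facets: "finite {F. F facet_of P}" using polytopeP finite_polytope_facets by blast

lemma facet_lattice:
  assumes "F facet_of P"
  shows "F = convex hull (F \<inter> S0)" "F \<inter> S0 \<noteq> {}" "F \<noteq> {}"
proof -
  have fo: "F face_of convex hull S0" using assms S0 by (simp add: facet_of_def)
  obtain S' where S': "S' \<subseteq> S0" "F = convex hull S'"
    using face_of_convex_hull_subset[OF finite_imp_compact[OF S0(1)] fo] by blast
  have cF: "convex F" using fo face_of_imp_convex by blast
  have "S' \<subseteq> convex hull S'" by (rule hull_subset)
  hence "S' \<subseteq> F \<inter> S0" using S' by auto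
  have "F = convex hull S'" by (rule S'(2))
  also have "\<dots> \<subseteq> convex hull (F \<inter> S0)" by (rule hull_mono) fact
  finally have "F \<subseteq> convex hull (F \<inter> S0)" .
  moreover have "convex hull (F \<inter> S0) \<subseteq> F" using cF by (simp add: hull_minimal)
  ultimately show "F = convex hull (F \<inter> S0)" by blast
  show "F \<noteq> {}" using assms by (simp add: facet_of_def)
  thus "F \<inter> S0 \<noteq> {}" using \<open>F = convex hull (F \<inter> S0)\<close> by auto
qed

lemma lattice_int: "x \<in> lattice_pts \<Longrightarrow> x $ i \<in> \<int>"
  by (simp add: lattice_pts_def)

lemma facet_int_normal:
  assumes F: "F facet_of P" and a0: "a \<noteq> 0" and Pa: "P \<subseteq> {x. a \<bullet> x \<le> b}" and Fa: "F = P \<inter> {x. a \<bullet> x = b}"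
  shows "\<exists>c. c \<noteq> 0 \<and> (\<forall>i. c$i \<in> \<int>) \<and> (\<exists>s. c = s *\<^sub>R a)"
proof -
  define T where "T = F \<inter> S0"
  obtain t0 where t0: "t0 \<in> T" using facet_lattice[OF F] T_def by blast
  have FT: "F = convex hull T" using facet_lattice(1)[OF F] T_def by simp
  have ahT: "affine hull T = {x. a \<bullet> x = b}"
    using facet_affine_hull[OF intP F a0 Fa] FT by (simp add: affine_hull_convex_hull)
  have dF: "aff_dim F = int CARD('n) - 1"
    using F aff_dim_nonempty_interior[OF intP] by (simp add: facet_of_def)
  have "aff_dim T = aff_dim F" by (metis FT aff_dim_convex_hull)
  moreover have "aff_dim T = int (dim ((+) (- t0) ` T))"
    by (rule aff_dim_eq_dim) (rule hull_inc[OF t0])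
  ultimately have dimD: "dim ((+) (- t0) ` T) = CARD('n) - 1" using dF by simp
  obtain B where B: "B \<subseteq> (+) (- t0) ` T" "independent B" "(+) (- t0) ` T \<subseteq> span B"
     "card B = dim ((+) (- t0) ` T)"
    using basis_exists by blast
  have tT: "a \<bullet> t = b" if "t \<in> T" for t using that Fa T_def by auto
  have aB: "\<forall>w\<in>B. a \<bullet> w = 0"
  proof
    fix w assume "w \<in> B"
    then obtain t where "t \<in> T" "w = - t0 + t" using B(1) by auto
    thus "a \<bullet> w = 0" using tT t0 by (simp add: inner_add_right inner_diff_right)
  qed
  have iB: "\<forall>w\<in>B. \<forall>i. w$i \<in> \<int>"
  proof (intro ballI allI)
    fix w i assume "w \<in> B"
    then obtain t where "t \<in> T" "w = - t0 + t" using B(1) by auto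
    moreover have "t \<in> lattice_pts" "t0 \<in> lattice_pts" using \<open>t \<in> T\<close> t0 S0(2) T_def by auto
    ultimately show "w$i \<in> \<int>" by (auto simp: lattice_pts_def)
  qed
  obtain c where c: "c \<noteq> 0" "\<forall>i. c$i \<in> \<int>" "\<forall>w\<in>B. c \<bullet> w = 0"
    using int_orth_vector[OF B(2) _ aB a0 iB] B(4) dimD by auto
  have cspan: "c \<bullet> y = 0" if "y \<in> span B" for y
    using that
  proof (induction rule: span_induct)
    case base show ?case by (simp add: c(3) subspace_def inner_add_right)
  next
    case (step x) thus ?case using c(3) by simp
  qed
  have cT: "c \<bullet> t = c \<bullet> t0" if "t \<in> T" for t
  proof -
    have "- t0 + t \<in> span B" using B(3) that by auto
    hence "c \<bullet> (- t0 + t) = 0" by (rule cspan)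
    thus ?thesis by (simp add: inner_add_right inner_diff_right)
  qed
  have "affine hull T \<subseteq> {x. c \<bullet> x = c \<bullet> t0}"
    by (rule hull_minimal) (use cT affine_hyperplane in auto)
  hence "c \<bullet> y = 0" if "a \<bullet> y = 0" for y
  proof -
    have "t0 + y \<in> affine hull T" using ahT that tT[OF t0] by (simp add: inner_add_right)
    hence "c \<bullet> (t0 + y) = c \<bullet> t0" using \<open>affine hull T \<subseteq> _\<close> by auto
    thus ?thesis by (simp add: inner_add_right)
  qed
  hence "c = ((c \<bullet> a) / (a \<bullet> a)) *\<^sub>R a" using parallel_normal a0 by blast
  thus ?thesis using c by blast
qed

end


lemma int_vec_of_real:
  fixes c :: "real^'n"
  assumes "\<forall>i. c$i \<in> \<int>"
  shows "\<exists>v::int^'n. rvec v = c"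
proof -
  have "\<forall>i. \<exists>n::int. c$i = of_int n" using assms by (metis Ints_cases)
  then obtain f where f: "\<forall>i. c$i = of_int (f i)" by metis
  show ?thesis by (rule exI[of _ "\<chi> i. f i"]) (simp add: vec_eq_iff f)
qed

lemma lfun_lattice_int: "x \<in> lattice_pts \<Longrightarrow> lfun u x \<in> \<int>"
  unfolding lfun_def lattice_pts_def by (auto intro!: Ints_sum Ints_mult)

context latpoly begin

lemma prim_exists:
  assumes F: "F facet_of P"
  shows "\<exists>u. is_prim_inner_normal P F u"
proof -
  obtain a b where ab: "a \<noteq> 0" "P \<subseteq> {x. a \<bullet> x \<le> b}" "F = P \<inter> {x. a \<bullet> x = b}"
    using facet_of_polyhedron[OF polyhedronP F] by blast
  obtain c s where c: "c \<noteq> 0" "\<forall>i. c$i \<in> \<int>" "c = s *\<^sub>R a"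
    using facet_int_normal[OF F ab] by blast
  obtain ci where ci: "rvec ci = c" using int_vec_of_real[OF c(2)] by blast
  have s0: "s \<noteq> 0" using c by auto
  define V where "V = {v::int^'n. v \<noteq> 0 \<and> (\<exists>l<0. rvec v = l *\<^sub>R a)}"
  have "(if s < 0 then ci else - ci) \<in> V"
  proof (cases "s < 0")
    case True
    have "ci \<noteq> 0" using ci c(1) rvec_zero_iff by blast
    thus ?thesis using True ci c(3) by (auto simp: V_def)
  next
    case False
    have "rvec (- ci) = (- s) *\<^sub>R a" using ci c by (simp add: rvec_def vec_eq_iff)
    moreover have "- ci \<noteq> 0" using ci c rvec_zero_iff by fastforce
    moreover have "- s < 0" using False s0 by simp
    ultimately show ?thesis using False unfolding V_def by (auto intro!: exI[of _ "- s"])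
  qed
  hence Vne: "\<exists>v. v \<in> V" by blast
  obtain k0 where k0: "a$k0 \<noteq> 0" using ab(1) by (metis vec_eq_iff zero_index)
  have Vk0: "v$k0 \<noteq> 0" if vV: "v \<in> V" for v
  proof -
    from vV have "\<exists>l<0. rvec v = l *\<^sub>R a" by (simp add: V_def)
    then obtain l where "l < 0" "rvec v = l *\<^sub>R a" by blast
    hence "rvec v $ k0 = l * a$k0" by simp
    hence "real_of_int (v$k0) = l * a$k0" by simp
    thus ?thesis using \<open>l < 0\<close> k0 by auto
  qed
  define n where "n = (LEAST n. \<exists>v\<in>V. nat \<bar>v$k0\<bar> = n)"
  have "\<exists>v\<in>V. nat \<bar>v$k0\<bar> = n" unfolding n_def using Vne by (rule_tac LeastI_ex) blast
  then obtain v where v: "v \<in> V" "nat \<bar>v$k0\<bar> = n" by blast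
  have vmin: "n \<le> nat \<bar>w$k0\<bar>" if "w \<in> V" for w
    unfolding n_def using that by (intro Least_le) blast
  obtain l where l: "l < 0" "rvec v = l *\<^sub>R a" using v by (auto simp: V_def)
  define g where "g = Gcd ((\<lambda>i. v $ i) ` UNIV)"
  have gdvd: "g dvd v$i" for i unfolding g_def by (rule Gcd_dvd) simp
  have g0: "g \<ge> 0" unfolding g_def by simp
  have gn0: "g \<noteq> 0" using gdvd[of k0] Vk0[OF v(1)] by auto
  have "g = 1"
  proof (rule ccontr)
    assume "g \<noteq> 1"
    hence g2: "g \<ge> 2" using g0 gn0 by linarith
    define v' where "v' = (\<chi> i. v$i div g)"
    have vv: "v$i = g * v'$i" for i using gdvd[of i] by (simp add: v'_def)
    have rv: "rvec v = real_of_int g *\<^sub>R rvec v'" by (simp add: vec_eq_iff vv)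
    hence "rvec v' = (1 / g) *\<^sub>R rvec v" using g2 by simp
    hence "rvec v' = (l / g) *\<^sub>R a" using l(2) by simp
    moreover have "v' \<noteq> 0" using v(1) vv by (auto simp: V_def vec_eq_iff)
    moreover have "l / g < 0" using l g2 by (simp add: divide_neg_pos)
    ultimately have "v' \<in> V" by (auto simp: V_def)
    hence "n \<le> nat \<bar>v'$k0\<bar>" by (rule vmin)
    moreover have "v'$k0 \<noteq> 0" using Vk0[OF \<open>v' \<in> V\<close>] .
    moreover have "\<bar>v$k0\<bar> = g * \<bar>v'$k0\<bar>" using vv[of k0] g0 by (simp add: abs_mult)
    moreover have "g * \<bar>v'$k0\<bar> \<ge> 2 * \<bar>v'$k0\<bar>" by (rule mult_right_mono) (use g2 in auto)
    ultimately have "\<bar>v'$k0\<bar> < \<bar>v$k0\<bar>" "n \<le> nat \<bar>v'$k0\<bar>" by auto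
    thus False using v(2) by linarith
  qed
  have "is_prim_inner_normal P F v"
    unfolding is_prim_inner_normal_def
  proof (intro conjI exI[of _ "l * b"])
    show "Gcd ((\<lambda>i. v $ i) ` UNIV) = 1" using \<open>g = 1\<close> g_def by simp
    show "\<forall>x\<in>P. l * b \<le> lfun v x"
    proof
      fix x assume "x \<in> P"
      hence "a \<bullet> x \<le> b" using ab by auto
      thus "l * b \<le> lfun v x" using l by (simp add: lfun_inner mult_left_mono_neg)
    qed
    show "F = {x \<in> P. lfun v x = l * b}" using ab(3) l by (auto simp: lfun_inner)
  qed
  thus ?thesis by blast
qed

lemma prim_unique:
  assumes F: "F facet_of P" and u: "is_prim_inner_normal P F u" and u': "is_prim_inner_normal P F u'"
  shows "u = u'"
proof -
  obtain c where c: "\<forall>x\<in>P. c \<le> lfun u x" "F = {x\<in>P. lfun u x = c}" and gu: "Gcd ((\<lambda>i. u $ i) ` UNIV) = 1"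
    using u by (auto simp: is_prim_inner_normal_def)
  obtain c' where c': "\<forall>x\<in>P. c' \<le> lfun u' x" "F = {x\<in>P. lfun u' x = c'}" and gu': "Gcd ((\<lambda>i. u' $ i) ` UNIV) = 1"
    using u' by (auto simp: is_prim_inner_normal_def)
  have u0: "- rvec u \<noteq> 0" using Gcd_vec_one_nonzero[OF gu] rvec_zero_iff by (metis neg_equal_0_iff_equal)
  have u0': "- rvec u' \<noteq> 0" using Gcd_vec_one_nonzero[OF gu'] rvec_zero_iff by (metis neg_equal_0_iff_equal)
  have P1: "P \<subseteq> {x. - rvec u \<bullet> x \<le> - c}" using c(1) by (auto simp: lfun_inner)
  have F1: "F = P \<inter> {x. - rvec u \<bullet> x = - c}" using c(2) by (auto simp: lfun_inner)
  have P1': "P \<subseteq> {x. - rvec u' \<bullet> x \<le> - c'}" using c'(1) by (auto simp: lfun_inner)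
  have F1': "F = P \<inter> {x. - rvec u' \<bullet> x = - c'}" using c'(2) by (auto simp: lfun_inner)
  obtain l where l: "l > 0" "- rvec u' = l *\<^sub>R (- rvec u)" "- c' = l * (- c)"
    using facet_normal_unique[OF intP F u0 P1 F1 u0' P1' F1'] by blast
  have ru: "rvec u' = l *\<^sub>R rvec u" using l(2) by simp
  have comp: "real_of_int (u'$i) = l * real_of_int (u$i)" for i
  proof -
    have "rvec u' $ i = (l *\<^sub>R rvec u) $ i" using ru by simp
    thus ?thesis by simp
  qed
  obtain k where k: "u$k \<noteq> 0" using Gcd_vec_one_nonzero[OF gu] by (metis vec_eq_iff zero_index)
  have cross: "u$k * u'$i = u'$k * u$i" for i
  proof -
    have "real_of_int (u$k * u'$i) = real_of_int (u'$k * u$i)" using comp[of i] comp[of k] by simp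
    thus ?thesis by (simp only: of_int_eq_iff)
  qed
  have d1: "u$k dvd u'$k"
  proof -
    have "u$k dvd Gcd ((*) (u'$k) ` ((\<lambda>i. u $ i) ` UNIV))"
      by (rule Gcd_greatest) (auto simp: cross[symmetric])
    thus ?thesis using gu by (simp add: Gcd_mult)
  qed
  have d2: "u'$k dvd u$k"
  proof -
    have "u'$k dvd Gcd ((*) (u$k) ` ((\<lambda>i. u' $ i) ` UNIV))"
      by (rule Gcd_greatest) (auto simp: cross)
    thus ?thesis using gu' by (simp add: Gcd_mult)
  qed
  have "\<bar>u$k\<bar> = \<bar>u'$k\<bar>" by (rule zdvd_antisym_abs[OF d1 d2])
  moreover have "(0 < u'$k \<and> 0 < u$k) \<or> (u'$k < 0 \<and> u$k < 0)"
  proof -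
    have "real_of_int (u$k) * real_of_int (u$k) > 0" using k by (metis not_real_square_gt_zero of_int_eq_0_iff)
    hence "l * (real_of_int (u$k) * real_of_int (u$k)) > 0" using l(1) by (rule mult_pos_pos[rotated])
    hence "real_of_int (u'$k) * real_of_int (u$k) > 0" using comp[of k] by (simp add: mult.assoc)
    hence "u'$k * u$k > 0" by (metis of_int_0_less_iff of_int_mult)
    thus ?thesis by (simp add: zero_less_mult_iff)
  qed
  ultimately have "u'$k = u$k" by (auto simp: abs_if split: if_split_asm)
  hence "l = 1" using comp[of k] k by simp
  hence "rvec u' = rvec u" using l(2) by simp
  thus ?thesis by (simp add: rvec_inj)
qed

lemma nF_prim:
  assumes F: "F facet_of P"
  shows "is_prim_inner_normal P F (nF P F)"
proof -
  have "\<exists>!u. is_prim_inner_normal P F u" using prim_exists[OF F] prim_unique[OF F] by blast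
  thus ?thesis unfolding nF_def by (rule theI')
qed

lemma nF_props:
  assumes F: "F facet_of P"
  shows "nF P F \<noteq> 0" "\<And>x. x \<in> P \<Longrightarrow> lfun (nF P F) x \<ge> - hF P F"
    "F = {x\<in>P. lfun (nF P F) x = - hF P F}" "hF P F \<in> \<int>"
proof -
  obtain c where c: "\<forall>x\<in>P. c \<le> lfun (nF P F) x" "F = {x\<in>P. lfun (nF P F) x = c}"
    and gu: "Gcd ((\<lambda>i. nF P F $ i) ` UNIV) = 1"
    using nF_prim[OF F] by (auto simp: is_prim_inner_normal_def)
  show "nF P F \<noteq> 0" using Gcd_vec_one_nonzero[OF gu] .
  obtain t where t: "t \<in> F \<inter> S0" using facet_lattice[OF F] by blast
  have tc: "lfun (nF P F) t = c" "t \<in> P" using t c(2) by auto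
  have "(INF x\<in>P. lfun (nF P F) x) = c"
    by (rule cInf_eq_minimum) (use tc c in auto)
  hence h: "hF P F = - c" by (simp add: hF_def)
  show "\<And>x. x \<in> P \<Longrightarrow> lfun (nF P F) x \<ge> - hF P F" using c h by simp
  show "F = {x\<in>P. lfun (nF P F) x = - hF P F}" using c h by simp
  have "t \<in> lattice_pts" using t S0 by auto
  hence "c \<in> \<int>" using lfun_lattice_int tc by metis
  thus "hF P F \<in> \<int>" using h by simp
qed

lemma facet_rep: "P = {x. \<forall>F. F facet_of P \<longrightarrow> lfun (nF P F) x \<ge> - hF P F}"
proof
  show "P \<subseteq> {x. \<forall>F. F facet_of P \<longrightarrow> lfun (nF P F) x \<ge> - hF P F}" using nF_props(2) by blast
next
  obtain \<F> where fin: "finite \<F>" and seq: "P = affine hull P \<inter> \<Inter>\<F>"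
             and faces: "\<And>h. h \<in> \<F> \<Longrightarrow> \<exists>a b. a \<noteq> 0 \<and> h = {x. a \<bullet> x \<le> b}"
             and min: "\<And>F'. F' \<subset> \<F> \<Longrightarrow> P \<subset> (affine hull P) \<inter> \<Inter>F'"
    using polyhedronP by (simp add: polyhedron_Int_affine_minimal) meson
  then obtain a b where ab: "\<And>h. h \<in> \<F> \<Longrightarrow> a h \<noteq> 0 \<and> h = {x. a h \<bullet> x \<le> b h}"
    by metis
  have ahP: "affine hull P = UNIV" using intP affine_hull_nonempty_interior by blast
  show "{x. \<forall>F. F facet_of P \<longrightarrow> lfun (nF P F) x \<ge> - hF P F} \<subseteq> P"
  proof
    fix x assume x: "x \<in> {x. \<forall>F. F facet_of P \<longrightarrow> lfun (nF P F) x \<ge> - hF P F}"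
    have "x \<in> h" if h: "h \<in> \<F>" for h
    proof -
      define C where "C = P \<inter> {x. a h \<bullet> x = b h}"
      have C: "C facet_of P"
        unfolding C_def using facet_of_polyhedron_explicit[OF fin seq ab min] h by blast
      have Ph: "P \<subseteq> {x. a h \<bullet> x \<le> b h}" using h ab seq by blast
      let ?u = "nF P C"
      have u0: "- rvec ?u \<noteq> 0" using nF_props(1)[OF C] rvec_zero_iff by (metis neg_equal_0_iff_equal)
      have P2: "P \<subseteq> {y. - rvec ?u \<bullet> y \<le> hF P C}"
      proof (intro subsetI CollectI)
        fix y assume "y \<in> P"
        hence "lfun ?u y \<ge> - hF P C" by (rule nF_props(2)[OF C])
        thus "- rvec ?u \<bullet> y \<le> hF P C" by (simp add: lfun_inner)
      qed
      have C3: "C = {x\<in>P. lfun ?u x = - hF P C}" by (rule nF_props(3)[OF C])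
      have "{x\<in>P. lfun ?u x = - hF P C} = P \<inter> {y. - rvec ?u \<bullet> y = hF P C}" by (auto simp: lfun_inner)
      with C3 have C2: "C = P \<inter> {y. - rvec ?u \<bullet> y = hF P C}" by (rule trans)
      obtain l where l: "l > 0" "- rvec ?u = l *\<^sub>R a h" "hF P C = l * b h"
        using facet_normal_unique[OF intP C _ Ph C_def u0 P2 C2] ab[OF h] by blast
      have "lfun ?u x \<ge> - hF P C" using x C by blast
      moreover have "rvec ?u = - (l *\<^sub>R a h)" using l(2) by (metis minus_minus)
      hence "lfun ?u x = - (l * (a h \<bullet> x))" by (simp add: lfun_inner)
      ultimately have "l * (a h \<bullet> x) \<le> l * b h" using l(3) by linarith
      hence "a h \<bullet> x \<le> b h" using l(1) by simp
      hence "x \<in> {x. a h \<bullet> x \<le> b h}" by simp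
      also have "{x. a h \<bullet> x \<le> b h} = h" using ab[OF h] by blast
      finally show ?thesis .
    qed
    thus "x \<in> P" using seq ahP by blast
  qed
qed

end


lemma lfun_scale: "lfun u (c *\<^sub>R x) = c * lfun u x"
  by (simp add: lfun_inner)

lemma lfun_add: "lfun u (x + y) = lfun u x + lfun u y"
  by (simp add: lfun_inner inner_add_right)

lemma lfun_sum: "lfun u (sum f A) = (\<Sum>a\<in>A. lfun u (f a))"
  by (simp add: lfun_inner inner_sum_right)

lemma int_gt_imp_ge1: "(x::real) \<in> \<int> \<Longrightarrow> y \<in> \<int> \<Longrightarrow> x > y \<Longrightarrow> x \<ge> y + 1"
proof -
  assume "x \<in> \<int>" "y \<in> \<int>" "x > y"
  then obtain a b where ab: "x = of_int a" "y = of_int b" by (auto elim!: Ints_cases)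
  hence "a > b" using \<open>x > y\<close> by simp
  hence "a \<ge> b + 1" by simp
  hence "(of_int a :: real) \<ge> of_int b + 1" by linarith
  thus ?thesis using ab by simp
qed

lemma bezout_vec:
  fixes u :: "int^'n"
  assumes "Gcd ((\<lambda>i. u $ i) ` UNIV) = 1"
  shows "\<exists>e::int^'n. (\<Sum>i\<in>UNIV. u$i * e$i) = 1"
proof -
  have H: "\<exists>e::'n \<Rightarrow> int. (\<Sum>i\<in>I. u$i * e i) = Gcd ((\<lambda>i. u $ i) ` I)" if "finite I" for I :: "'n set"
    using that
  proof (induction I rule: finite_induct)
    case empty show ?case by simp
  next
    case (insert i I)
    then obtain e where e: "(\<Sum>i\<in>I. u$i * e i) = Gcd ((\<lambda>i. u $ i) ` I)" by blast
    obtain x y where xy: "x * u$i + y * Gcd ((\<lambda>i. u $ i) ` I) = gcd (u$i) (Gcd ((\<lambda>i. u $ i) ` I))"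
      using bezout_int by blast
    define e' where "e' = (\<lambda>j. if j = i then x else y * e j)"
    have "(\<Sum>j\<in>insert i I. u$j * e' j) = x * u$i + (\<Sum>j\<in>I. u$j * (y * e j))"
      using insert.hyps by (simp add: e'_def mult.commute cong: sum.cong) (auto intro!: sum.cong)
    also have "(\<Sum>j\<in>I. u$j * (y * e j)) = y * (\<Sum>j\<in>I. u$j * e j)"
      by (simp add: sum_distrib_left mult.left_commute)
    finally show ?case using xy e by (auto intro!: exI[of _ e'])
  qed
  have "\<exists>e::'n \<Rightarrow> int. (\<Sum>i\<in>UNIV. u$i * e i) = Gcd ((\<lambda>i. u $ i) ` UNIV)" by (rule H) simp
  then obtain e where "(\<Sum>i\<in>UNIV. u$i * e i) = Gcd ((\<lambda>i. u $ i) ` UNIV)" by blast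
  hence "(\<Sum>i\<in>UNIV. u$i * e i) = 1" using assms by simp
  thus ?thesis by (intro exI[of _ "\<chi> i. e i"]) simp
qed

lemma lfun_rvec: "lfun u (rvec w) = of_int (\<Sum>i\<in>UNIV. u$i * w$i)"
  by (simp add: lfun_def)

context latpoly begin

lemma facets_nested:
  assumes "F facet_of P" "G facet_of P" "F \<subseteq> G"
  shows "F = G"
proof (rule ccontr)
  assume "F \<noteq> G"
  have "F face_of G" using face_of_subset[OF facet_of_imp_face_of[OF assms(1)] assms(3) facet_of_imp_subset[OF assms(2)]] .
  moreover have "convex G" using assms(2) face_of_imp_convex facet_of_imp_face_of by blast
  ultimately have "aff_dim F < aff_dim G" using face_of_aff_dim_lt \<open>F \<noteq> G\<close> by blast
  thus False using assms by (simp add: facet_of_def)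
qed

lemma scaled_rep:
  assumes k: "k > 0"
  shows "x \<in> (\<lambda>v. k *\<^sub>R v) ` P \<longleftrightarrow> (\<forall>F. F facet_of P \<longrightarrow> lfun (nF P F) x \<ge> - k * hF P F)"
proof -
  have "x \<in> (\<lambda>v. k *\<^sub>R v) ` P \<longleftrightarrow> (1/k) *\<^sub>R x \<in> P"
  proof
    assume "x \<in> (\<lambda>v. k *\<^sub>R v) ` P"
    then obtain p where "p \<in> P" "x = k *\<^sub>R p" by blast
    thus "(1/k) *\<^sub>R x \<in> P" using k by simp
  next
    assume "(1/k) *\<^sub>R x \<in> P"
    moreover have "x = k *\<^sub>R ((1/k) *\<^sub>R x)" using k by simp
    ultimately show "x \<in> (\<lambda>v. k *\<^sub>R v) ` P" by blast
  qed
  also have "\<dots> \<longleftrightarrow> (\<forall>F. F facet_of P \<longrightarrow> lfun (nF P F) ((1/k) *\<^sub>R x) \<ge> - hF P F)"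
    by (subst facet_rep) simp
  also have "\<dots> \<longleftrightarrow> (\<forall>F. F facet_of P \<longrightarrow> lfun (nF P F) x \<ge> - k * hF P F)"
  proof -
    have "lfun u ((1/k) *\<^sub>R x) \<ge> - h \<longleftrightarrow> lfun u x \<ge> - k * h" for u h
      using k by (simp add: lfun_scale field_simps)
    thus ?thesis by simp
  qed
  finally show ?thesis .
qed

lemma scaled_zero: "x \<in> (\<lambda>v. 0 *\<^sub>R v) ` P \<longleftrightarrow> x = 0"
  using P_ne by auto

lemma scaled_ge:
  assumes "k \<ge> 0" "x \<in> (\<lambda>v. k *\<^sub>R v) ` P" "F facet_of P"
  shows "lfun (nF P F) x \<ge> - k * hF P F"
proof -
  obtain p where p: "p \<in> P" "x = k *\<^sub>R p" using assms by blast
  have "lfun (nF P F) p \<ge> - hF P F" using nF_props(2)[OF assms(3) p(1)] .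
  hence "k * lfun (nF P F) p \<ge> k * (- hF P F)" by (rule mult_left_mono[OF _ assms(1)])
  thus ?thesis using p by (simp add: lfun_scale)
qed

lemma interior_scaled:
  assumes k: "k > 0"
  shows "x \<in> interior ((\<lambda>v. k *\<^sub>R v) ` P) \<longleftrightarrow> (\<forall>F. F facet_of P \<longrightarrow> lfun (nF P F) x > - k * hF P F)"
proof
  assume x: "x \<in> interior ((\<lambda>v. k *\<^sub>R v) ` P)"
  show "\<forall>F. F facet_of P \<longrightarrow> lfun (nF P F) x > - k * hF P F"
  proof (intro allI impI)
    fix F assume F: "F facet_of P"
    have sub: "(\<lambda>v. k *\<^sub>R v) ` P \<subseteq> {y. (- rvec (nF P F)) \<bullet> y \<le> k * hF P F}"
    proof (intro subsetI CollectI)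
      fix y assume "y \<in> (\<lambda>v. k *\<^sub>R v) ` P"
      hence "lfun (nF P F) y \<ge> - k * hF P F" using scaled_ge[of k y F] k F by simp
      thus "(- rvec (nF P F)) \<bullet> y \<le> k * hF P F" by (simp add: lfun_inner)
    qed
    have "- rvec (nF P F) \<noteq> 0" using nF_props(1)[OF F] rvec_zero_iff by (metis neg_equal_0_iff_equal)
    from interior_strict[OF x sub this] show "lfun (nF P F) x > - k * hF P F"
      by (simp add: lfun_inner)
  qed
next
  assume x: "\<forall>F. F facet_of P \<longrightarrow> lfun (nF P F) x > - k * hF P F"
  define U where "U = (\<Inter>F\<in>{F. F facet_of P}. {y. rvec (nF P F) \<bullet> y > - k * hF P F})"
  have "open U" unfolding U_def using finite_facets by (intro open_INT) (auto simp: open_halfspace_gt)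
  moreover have "x \<in> U" using x by (auto simp: U_def lfun_inner)
  moreover have "U \<subseteq> (\<lambda>v. k *\<^sub>R v) ` P"
  proof
    fix y assume "y \<in> U"
    hence "\<forall>F. F facet_of P \<longrightarrow> lfun (nF P F) y \<ge> - k * hF P F" by (auto simp: U_def lfun_inner less_imp_le)
    thus "y \<in> (\<lambda>v. k *\<^sub>R v) ` P" using scaled_rep[OF k] by blast
  qed
  ultimately show "x \<in> interior ((\<lambda>v. k *\<^sub>R v) ` P)" by (meson interior_maximal interiorI)
qed

lemma lattice_near_facet:
  assumes F: "F facet_of P"
  shows "\<exists>j::nat. j \<ge> 1 \<and> (\<exists>w::int^'n.
           (\<forall>G. G facet_of P \<longrightarrow> lfun (nF P G) (rvec w) > - real j * hF P G) \<and>
           lfun (nF P F) (rvec w) = 1 - real j * hF P F)"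
proof -
  define T where "T = F \<inter> S0"
  have finT: "finite T" and Tne: "T \<noteq> {}" using S0(1) facet_lattice[OF F] by (auto simp: T_def)
  have TP: "T \<subseteq> P" using T_def facet_of_imp_subset[OF F] by auto
  have Tlat: "T \<subseteq> lattice_pts" using S0(2) T_def by auto
  define N where "N = card T"
  have N1: "N \<ge> 1" using finT Tne by (simp add: N_def Suc_le_eq card_gt_0_iff)
  define q where "q = (\<Sum>t\<in>T. t)"
  have qlat: "\<forall>i. q$i \<in> \<int>" using Tlat by (auto simp: q_def lattice_pts_def intro!: Ints_sum)
  obtain qi where qi: "rvec qi = q" using int_vec_of_real[OF qlat] by blast
  have qF: "lfun (nF P F) q = - N * hF P F"
  proof -
    have "lfun (nF P F) q = (\<Sum>t\<in>T. lfun (nF P F) t)" by (simp add: q_def lfun_sum)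
    also have "\<dots> = (\<Sum>t\<in>T. - hF P F)"
    proof (rule sum.cong)
      fix t assume "t \<in> T"
      hence "t \<in> F" by (simp add: T_def)
      thus "lfun (nF P F) t = - hF P F" using nF_props(3)[OF F] by blast
    qed simp
    finally show ?thesis by (simp add: N_def)
  qed
  have qG: "lfun (nF P G) q \<ge> - N * hF P G + 1" if G: "G facet_of P" "G \<noteq> F" for G
  proof -
    have ge: "lfun (nF P G) t \<ge> - hF P G" if "t \<in> T" for t using nF_props(2)[OF G(1)] that TP by blast
    have "\<exists>t\<in>T. lfun (nF P G) t > - hF P G"
    proof (rule ccontr)
      assume "\<not> ?thesis"
      hence "lfun (nF P G) t = - hF P G" if "t \<in> T" for t using ge[OF that] that by force
      hence "T \<subseteq> G" using nF_props(3)[OF G(1)] TP by blast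
      hence "convex hull T \<subseteq> G" using G(1) face_of_imp_convex facet_of_imp_face_of by (metis hull_minimal)
      hence "F \<subseteq> G" using facet_lattice(1)[OF F] T_def by simp
      thus False using facets_nested[OF F G(1)] G(2) by simp
    qed
    then have "(\<Sum>t\<in>T. - hF P G) < (\<Sum>t\<in>T. lfun (nF P G) t)"
      using ge finT by (intro sum_strict_mono_ex1) auto
    hence "lfun (nF P G) q > - N * hF P G" by (simp add: q_def lfun_sum N_def)
    moreover have "lfun (nF P G) q \<in> \<int>" using qi lfun_rvec by (metis Ints_of_int)
    moreover have "- N * hF P G \<in> \<int>" using nF_props(4)[OF G(1)] by simp
    ultimately show ?thesis using int_gt_imp_ge1 by blast
  qed
  have gF: "Gcd ((\<lambda>i. nF P F $ i) ` UNIV) = 1" using nF_prim[OF F] by (simp add: is_prim_inner_normal_def)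
  obtain e where e: "(\<Sum>i\<in>UNIV. nF P F $ i * e$i) = 1"
    using bezout_vec[OF gF] by blast
  define M where "M = (\<Sum>G\<in>{G. G facet_of P}. \<bar>lfun (nF P G) (rvec e)\<bar>)"
  have M0: "M \<ge> 0" unfolding M_def by (simp add: sum_nonneg)
  have Mge: "\<bar>lfun (nF P G) (rvec e)\<bar> \<le> M" if "G facet_of P" for G
    unfolding M_def using finite_facets that by (intro member_le_sum) auto
  obtain m :: nat where m: "real m > M" using reals_Archimedean2 by blast
  have m1: "m \<ge> 1" using m M0 by (cases m) auto
  define w where "w = (\<chi> i. int m * qi$i + e$i)"
  have qc: "q$i = real_of_int (qi$i)" for i using qi by (auto simp: rvec_def)
  have rw: "rvec w = real m *\<^sub>R q + rvec e"
    by (simp add: w_def rvec_def vec_eq_iff qc)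
  define j where "j = m * N"
  have j1: "j \<ge> 1" using m1 N1 by (simp add: j_def)
  have eF: "lfun (nF P F) (rvec e) = 1" using e by (simp add: lfun_rvec)
  have wF: "lfun (nF P F) (rvec w) = 1 - real j * hF P F"
    using qF eF by (simp add: rw lfun_add lfun_scale j_def)
  have "lfun (nF P G) (rvec w) > - real j * hF P G" if G: "G facet_of P" for G
  proof (cases "G = F")
    case True thus ?thesis using wF by simp
  next
    case False
    have "lfun (nF P G) (rvec w) = m * lfun (nF P G) q + lfun (nF P G) (rvec e)"
      by (simp add: rw lfun_add lfun_scale)
    moreover have "m * lfun (nF P G) q \<ge> m * (- N * hF P G + 1)"
      using qG[OF G False] by (simp add: mult_left_mono)
    moreover have "lfun (nF P G) (rvec e) > - m" using Mge[OF G] m by linarith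
    ultimately show ?thesis by (simp add: j_def algebra_simps)
  qed
  thus ?thesis using j1 wF by blast
qed

end


lemma lookup_map_key_inj:
  assumes "inj f"
  shows "Poly_Mapping.lookup (Poly_Mapping.map_key f p) k = Poly_Mapping.lookup p (f k)"
  using Poly_Mapping.map_key.rep_eq[OF assms, of p] by simp

lemma lookup_single_mult:
  fixes f :: "('a::cancel_comm_monoid_add) \<Rightarrow>\<^sub>0 ('b::semiring_0)"
  shows "Poly_Mapping.lookup (Poly_Mapping.single k c * f) (k + j) = c * Poly_Mapping.lookup f j"
proof -
  have "Poly_Mapping.lookup (Poly_Mapping.single k c * f) (k + j) =
      (\<Sum>l. Poly_Mapping.lookup (Poly_Mapping.single k c) l * (\<Sum>q. Poly_Mapping.lookup f q when k + j = l + q))"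
    by (rule lookup_mult)
  also have "\<dots> = c * (\<Sum>q. Poly_Mapping.lookup f q when k + j = k + q)"
    by (simp add: lookup_single when_mult Sum_any_when_equal)
  also have "(\<Sum>q. Poly_Mapping.lookup f q when k + j = k + q) = (\<Sum>q. Poly_Mapping.lookup f q when q = j)"
    by (rule Sum_any.cong) (auto simp: when_def)
  also have "\<dots> = Poly_Mapping.lookup f j" by simp
  finally show ?thesis .
qed

lemma keys_single_mult:
  fixes f :: "('a::cancel_comm_monoid_add) \<Rightarrow>\<^sub>0 ('b::semiring_0)"
  shows "Poly_Mapping.keys (Poly_Mapping.single k c * f) \<subseteq> (+) k ` Poly_Mapping.keys f"
  using keys_mult[of "Poly_Mapping.single k c" f] by (auto split: if_splits)

lemma keys_single_mult_eq:
  fixes f :: "('a::cancel_comm_monoid_add) \<Rightarrow>\<^sub>0 ('b::field)"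
  assumes "c \<noteq> 0"
  shows "Poly_Mapping.keys (Poly_Mapping.single k c * f) = (+) k ` Poly_Mapping.keys f"
proof
  show "Poly_Mapping.keys (Poly_Mapping.single k c * f) \<subseteq> (+) k ` Poly_Mapping.keys f"
    by (rule keys_single_mult)
  show "(+) k ` Poly_Mapping.keys f \<subseteq> Poly_Mapping.keys (Poly_Mapping.single k c * f)"
    using assms by (auto simp: in_keys_iff lookup_single_mult)
qed

lemma map_key_shift:
  fixes g :: "('a::cancel_comm_monoid_add) \<Rightarrow>\<^sub>0 ('b::semiring_1)"
  shows "Poly_Mapping.map_key ((+) c) (Poly_Mapping.single c 1 * g) = g"
proof -
  have inj: "inj ((+) c)" by (simp add: inj_def)
  show ?thesis
    by (rule poly_mapping_eqI) (simp add: lookup_map_key_inj[OF inj] lookup_single_mult)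
qed

lemma shift_back:
  fixes w :: "('a::cancel_comm_monoid_add) \<Rightarrow>\<^sub>0 ('b::semiring_1)"
  assumes "Poly_Mapping.keys w \<subseteq> range ((+) c)"
  shows "Poly_Mapping.single c 1 * Poly_Mapping.map_key ((+) c) w = w"
proof (rule poly_mapping_eqI)
  have inj: "inj ((+) c)" by (simp add: inj_def)
  fix j
  show "Poly_Mapping.lookup (Poly_Mapping.single c 1 * Poly_Mapping.map_key ((+) c) w) j = Poly_Mapping.lookup w j"
  proof (cases "j \<in> range ((+) c)")
    case True
    then obtain k where "j = c + k" by blast
    thus ?thesis by (simp add: lookup_single_mult lookup_map_key_inj[OF inj])
  next
    case False
    hence "j \<notin> Poly_Mapping.keys (Poly_Mapping.single c 1 * Poly_Mapping.map_key ((+) c) w)"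
      using keys_single_mult[of c 1 "Poly_Mapping.map_key ((+) c) w"] by blast
    moreover have "j \<notin> Poly_Mapping.keys w" using False assms by blast
    ultimately show ?thesis by (simp add: in_keys_iff)
  qed
qed

lemma poly_mapping_expand:
  fixes f :: "'a \<Rightarrow>\<^sub>0 ('b::comm_monoid_add)"
  shows "f = (\<Sum>k\<in>Poly_Mapping.keys f. Poly_Mapping.single k (Poly_Mapping.lookup f k))"
proof (rule poly_mapping_eqI)
  fix j
  have "Poly_Mapping.lookup (\<Sum>k\<in>Poly_Mapping.keys f. Poly_Mapping.single k (Poly_Mapping.lookup f k)) j
      = (\<Sum>k\<in>Poly_Mapping.keys f. Poly_Mapping.lookup f k when k = j)"
    by (simp add: lookup_sum lookup_single when_def eq_commute)
  also have "\<dots> = Poly_Mapping.lookup f j"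
    by (cases "j \<in> Poly_Mapping.keys f") (simp_all add: when_def in_keys_iff)
  finally show "Poly_Mapping.lookup f j = Poly_Mapping.lookup (\<Sum>k\<in>Poly_Mapping.keys f. Poly_Mapping.single k (Poly_Mapping.lookup f k)) j"
    by simp
qed



lemma rvec_add [simp]: "rvec (a + b) = rvec a + rvec b"
  by (simp add: rvec_def vec_eq_iff)
lemma rvec_diff [simp]: "rvec (a - b) = rvec a - rvec b"
  by (simp add: rvec_def vec_eq_iff)
lemma rvec_0 [simp]: "rvec 0 = 0"
  by (simp add: rvec_def vec_eq_iff)
lemma rvec_lattice: "rvec z \<in> lattice_pts"
  by (simp add: lattice_pts_def)
lemma lattice_rvec: "x \<in> lattice_pts \<longleftrightarrow> (\<exists>z. x = rvec z)"
  using int_vec_of_real[of x] rvec_lattice by (auto simp: lattice_pts_def)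

lemma lfun_diff: "lfun u (x - y) = lfun u x - lfun u y"
  by (simp add: lfun_inner inner_diff_right)

lemma convex_ineqs: "convex {x. \<forall>F. Q F \<longrightarrow> lfun (n F) x \<ge> c F}"
  unfolding convex_def
proof (intro ballI allI impI CollectI)
  fix x y u v F
  assume x: "x \<in> {x. \<forall>F. Q F \<longrightarrow> lfun (n F) x \<ge> c F}" and y: "y \<in> {x. \<forall>F. Q F \<longrightarrow> lfun (n F) x \<ge> c F}"
    and uv: "0 \<le> (u::real)" "0 \<le> v" "u + v = 1" and F: "Q F"
  have "u * lfun (n F) x \<ge> u * c F" using x F uv by (simp add: mult_left_mono)
  moreover have "v * lfun (n F) y \<ge> v * c F" using y F uv by (simp add: mult_left_mono)
  ultimately have "lfun (n F) (u *\<^sub>R x + v *\<^sub>R y) \<ge> (u + v) * c F"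
    by (simp add: lfun_add lfun_scale algebra_simps)
  thus "lfun (n F) (u *\<^sub>R x + v *\<^sub>R y) \<ge> c F" using uv by simp
qed

lemma part2: "remainder_poly P \<subseteq>
           {x. \<forall>F. F facet_of P \<longrightarrow> lfun (nF P F) x \<ge> (real (codegree P) - 1) * hF P F - 1}"
  unfolding remainder_poly_def by (rule hull_minimal) (auto intro: convex_ineqs)

context latpoly begin

abbreviation "cd \<equiv> codegree P"

lemma hF_int: "F facet_of P \<Longrightarrow> hF P F \<in> \<int>" by (rule nF_props(4))

lemma lfun_rvec_int: "lfun u (rvec z) \<in> \<int>"
  unfolding lfun_rvec by (rule Ints_of_int)

lemma interior_int:
  assumes "k \<ge> 1" "rvec z \<in> interior ((\<lambda>v. real k *\<^sub>R v) ` P)" "F facet_of P"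
  shows "lfun (nF P F) (rvec z) \<ge> 1 - real k * hF P F"
proof -
  have "lfun (nF P F) (rvec z) > - real k * hF P F" using interior_scaled[of "real k"] assms by auto
  moreover have "- real k * hF P F \<in> \<int>" using hF_int[OF assms(3)] by simp
  ultimately show ?thesis using int_gt_imp_ge1[OF lfun_rvec_int] by fastforce
qed

lemma cod_exists: "cd \<ge> 1 \<and> (\<exists>z. rvec z \<in> interior ((\<lambda>v. real cd *\<^sub>R v) ` P))"
proof -
  have "aff_dim P = int CARD('n)" using aff_dim_nonempty_interior[OF intP] by simp
  hence "0 < aff_dim P" by simp
  then obtain F where F: "F facet_of P" using polytope_facet_exists[OF polytopeP] by blast
  obtain j w where jw: "j \<ge> (1::nat)" "\<forall>G. G facet_of P \<longrightarrow> lfun (nF P G) (rvec w) > - real j * hF P G"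
    using lattice_near_facet[OF F] by blast
  have "rvec w \<in> interior ((\<lambda>v. real j *\<^sub>R v) ` P)" using interior_scaled[of "real j"] jw by auto
  hence ex: "\<exists>k::nat. 1 \<le> k \<and> interior ((\<lambda>v. real k *\<^sub>R v) ` P) \<inter> lattice_pts \<noteq> {}"
    using jw(1) rvec_lattice by blast
  have "1 \<le> cd \<and> interior ((\<lambda>v. real cd *\<^sub>R v) ` P) \<inter> lattice_pts \<noteq> {}"
    unfolding codegree_def by (rule LeastI_ex[OF ex])
  then obtain x where "cd \<ge> 1" "x \<in> interior ((\<lambda>v. real cd *\<^sub>R v) ` P)" "x \<in> lattice_pts" by blast
  moreover then obtain z where "x = rvec z" using lattice_rvec by blast
  ultimately show ?thesis by blast
qed

lemma cd_ge1: "cd \<ge> 1" using cod_exists by blast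

lemma cod_min:
  assumes "k \<ge> 1" "rvec z \<in> interior ((\<lambda>v. real k *\<^sub>R v) ` P)"
  shows "cd \<le> k"
  unfolding codegree_def by (rule Least_le) (use assms rvec_lattice in blast)

lemma part1: "floor_poly ((\<lambda>v. real cd *\<^sub>R v) ` P) \<subseteq>
           {x. \<forall>F. F facet_of P \<longrightarrow> lfun (nF P F) x \<ge> 1 - real cd * hF P F}"
  unfolding floor_poly_def
proof (rule hull_minimal)
  show "convex {x. \<forall>F. F facet_of P \<longrightarrow> lfun (nF P F) x \<ge> 1 - real cd * hF P F}" by (rule convex_ineqs)
  show "interior ((\<lambda>v. real cd *\<^sub>R v) ` P) \<inter> lattice_pts
      \<subseteq> {x. \<forall>F. F facet_of P \<longrightarrow> lfun (nF P F) x \<ge> 1 - real cd * hF P F}"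
  proof (intro subsetI CollectI allI impI)
    fix x F assume x: "x \<in> interior ((\<lambda>v. real cd *\<^sub>R v) ` P) \<inter> lattice_pts" and F: "F facet_of P"
    then obtain z where "x = rvec z" using lattice_rvec by blast
    thus "lfun (nF P F) x \<ge> 1 - real cd * hF P F" using interior_int[OF cd_ge1 _ F] x by blast
  qed
qed

definition "Rset = {x\<in>lattice_pts. \<forall>F. F facet_of P \<longrightarrow> lfun (nF P F) x \<ge> (real cd - 1) * hF P F - 1}"

lemma rem_lattice: "remainder_poly P \<inter> lattice_pts = Rset"
proof
  show "remainder_poly P \<inter> lattice_pts \<subseteq> Rset"
  proof
    fix x assume x: "x \<in> remainder_poly P \<inter> lattice_pts"
    hence "\<forall>F. F facet_of P \<longrightarrow> lfun (nF P F) x \<ge> (real cd - 1) * hF P F - 1" using part2 by blast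
    thus "x \<in> Rset" using x by (simp add: Rset_def)
  qed
  show "Rset \<subseteq> remainder_poly P \<inter> lattice_pts"
    unfolding Rset_def remainder_poly_def by (auto intro: hull_inc)
qed

lemma floor_lattice: "floor_poly ((\<lambda>v. real cd *\<^sub>R v) ` P) \<inter> lattice_pts =
    interior ((\<lambda>v. real cd *\<^sub>R v) ` P) \<inter> lattice_pts"
proof
  have "convex ((\<lambda>v. real cd *\<^sub>R v) ` P)" using convexP by (simp add: convex_scaling)
  hence "floor_poly ((\<lambda>v. real cd *\<^sub>R v) ` P) \<subseteq> interior ((\<lambda>v. real cd *\<^sub>R v) ` P)"
    unfolding floor_poly_def by (intro hull_minimal convex_interior) auto
  thus "floor_poly ((\<lambda>v. real cd *\<^sub>R v) ` P) \<inter> lattice_pts \<subseteq> interior ((\<lambda>v. real cd *\<^sub>R v) ` P) \<inter> lattice_pts"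
    by blast
  show "interior ((\<lambda>v. real cd *\<^sub>R v) ` P) \<inter> lattice_pts \<subseteq> floor_poly ((\<lambda>v. real cd *\<^sub>R v) ` P) \<inter> lattice_pts"
    unfolding floor_poly_def using hull_subset by fastforce
qed

abbreviation "Dec \<equiv> {x + y | x y. x \<in> floor_poly ((\<lambda>v. real cd *\<^sub>R v) ` P) \<inter> lattice_pts
                                          \<and> y \<in> remainder_poly P \<inter> lattice_pts}"

lemma dec_sub: "Dec \<subseteq> P \<inter> lattice_pts"
proof
  fix z assume "z \<in> Dec"
  then obtain x y where z: "z = x + y" and x: "x \<in> interior ((\<lambda>v. real cd *\<^sub>R v) ` P) \<inter> lattice_pts"
    and y: "y \<in> Rset" using floor_lattice rem_lattice by blast
  obtain xi where xi: "x = rvec xi" using x lattice_rvec by blast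
  obtain yi where yi: "y = rvec yi" using y lattice_rvec by (auto simp: Rset_def)
  have "lfun (nF P F) z \<ge> - hF P F" if F: "F facet_of P" for F
  proof -
    have "lfun (nF P F) x \<ge> 1 - real cd * hF P F" using interior_int[OF cd_ge1 _ F] x xi by blast
    moreover have "lfun (nF P F) y \<ge> (real cd - 1) * hF P F - 1" using y F by (auto simp: Rset_def)
    ultimately show ?thesis using z by (simp add: lfun_add algebra_simps)
  qed
  hence "z \<in> P" by (subst facet_rep) blast
  moreover have "z \<in> lattice_pts" using z xi yi by (simp add: rvec_lattice flip: rvec_add)
  ultimately show "z \<in> P \<inter> lattice_pts" by blast
qed

lemma part3_geom:
  assumes e: "rvec z0 \<in> interior ((\<lambda>v. real cd *\<^sub>R v) ` P)"
    and v: "1 \<le> k" "rvec vx \<in> interior ((\<lambda>v. real k *\<^sub>R v) ` P)"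
    and eq: "z0 + xi = vx + tx" "cd + 1 = k + tk"
    and t: "rvec tx \<in> (\<lambda>v. real tk *\<^sub>R v) ` P"
    and Q: "\<And>wx j. 1 \<le> j \<Longrightarrow> rvec wx \<in> interior ((\<lambda>v. real j *\<^sub>R v) ` P) \<Longrightarrow>
             (\<exists>sx sk. rvec sx \<in> (\<lambda>v. real sk *\<^sub>R v) ` P \<and> wx + tx = z0 + sx \<and> j + tk = cd + sk)"
  shows "rvec xi \<in> Dec"
proof -
  have ka: "cd \<le> k" using cod_min[OF v] .
  hence "tk = 0 \<or> tk = 1" using eq(2) by linarith
  thus ?thesis
  proof
    assume tk: "tk = 1"
    hence k: "k = cd" using eq(2) by simp
    define y where "y = tx - z0"
    have xi: "xi = vx + y" using eq(1) by (simp add: y_def algebra_simps)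
    have "lfun (nF P F) (rvec y) \<ge> (real cd - 1) * hF P F - 1" if F: "F facet_of P" for F
    proof -
      obtain j w where jw: "j \<ge> (1::nat)" "\<forall>G. G facet_of P \<longrightarrow> lfun (nF P G) (rvec w) > - real j * hF P G"
        "lfun (nF P F) (rvec w) = 1 - real j * hF P F"
        using lattice_near_facet[OF F] by blast
      have "rvec w \<in> interior ((\<lambda>v. real j *\<^sub>R v) ` P)" using interior_scaled[of "real j"] jw by auto
      then obtain sx sk where s: "rvec sx \<in> (\<lambda>v. real sk *\<^sub>R v) ` P" "w + tx = z0 + sx" "j + tk = cd + sk"
        using Q jw(1) by blast
      have "lfun (nF P F) (rvec sx) \<ge> - real sk * hF P F" using scaled_ge[OF _ s(1) F] by simp
      moreover have "sx = w + y" using s(2) by (simp add: y_def algebra_simps)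
      moreover have "real sk = real j + 1 - real cd" using s(3) tk by linarith
      ultimately show ?thesis using jw(3) by (simp add: lfun_add algebra_simps)
    qed
    hence "rvec y \<in> Rset" by (auto simp: Rset_def rvec_lattice)
    moreover have "rvec vx \<in> interior ((\<lambda>v. real cd *\<^sub>R v) ` P) \<inter> lattice_pts" using v k rvec_lattice by simp
    ultimately show ?thesis using xi floor_lattice rem_lattice by auto
  next
    assume tk: "tk = 0"
    hence k: "k = cd + 1" using eq(2) by simp
    have "rvec tx = 0" using t tk scaled_zero by simp
    hence tx: "tx = 0" using rvec_zero_iff by blast
    define y where "y = vx - z0 - z0"
    have xi: "xi = z0 + y" using eq(1) tx by (simp add: y_def algebra_simps)
    have "lfun (nF P F) (rvec y) \<ge> (real cd - 1) * hF P F - 1" if F: "F facet_of P" for F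
    proof -
      obtain j w where jw: "j \<ge> (1::nat)" "\<forall>G. G facet_of P \<longrightarrow> lfun (nF P G) (rvec w) > - real j * hF P G"
        "lfun (nF P F) (rvec w) = 1 - real j * hF P F"
        using lattice_near_facet[OF F] by blast
      have "rvec w \<in> interior ((\<lambda>v. real j *\<^sub>R v) ` P)" using interior_scaled[of "real j"] jw by auto
      then obtain sx sk where s: "rvec sx \<in> (\<lambda>v. real sk *\<^sub>R v) ` P" "w + tx = z0 + sx" "j + tk = cd + sk"
        using Q jw(1) by blast
      have "lfun (nF P F) (rvec sx) \<ge> - real sk * hF P F" using scaled_ge[OF _ s(1) F] by simp
      moreover have "sx = w - z0" using s(2) tx by (simp add: algebra_simps)
      moreover have "real sk = real j - real cd" using s(3) tk by linarith
      ultimately have z0F: "lfun (nF P F) (rvec z0) \<le> 1 - real cd * hF P F"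
        using jw(3) by (simp add: lfun_diff algebra_simps)
      have "lfun (nF P F) (rvec vx) \<ge> 1 - real k * hF P F" using interior_int[OF v F] .
      moreover have "lfun (nF P F) (rvec y) = lfun (nF P F) (rvec vx) - lfun (nF P F) (rvec z0) - lfun (nF P F) (rvec z0)"
        by (simp only: y_def rvec_diff lfun_diff)
      ultimately show ?thesis using z0F k by (simp add: algebra_simps)
    qed
    hence "rvec y \<in> Rset" by (auto simp: Rset_def rvec_lattice)
    moreover have "rvec z0 \<in> interior ((\<lambda>v. real cd *\<^sub>R v) ` P) \<inter> lattice_pts" using e rvec_lattice by simp
    ultimately show ?thesis using xi floor_lattice rem_lattice by auto
  qed
qed

end


lemma lookup_sum_list_nz:
  "Poly_Mapping.lookup (sum_list (map g l)) k \<noteq> 0 \<Longrightarrow> \<exists>p\<in>set l. Poly_Mapping.lookup (g p) k \<noteq> 0"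
  by (induction l) (auto simp: lookup_add)

context latpoly begin

lemma cone_zero: "(0, 0) \<in> cone_pts P"
  using P_ne by (auto simp: cone_pts_def)

lemma int_cone_sub: "int_cone_pts P \<subseteq> cone_pts P"
  using interior_subset by (fastforce simp: int_cone_pts_def cone_pts_def)

lemma single_in_ring:
  fixes K :: "'k::field itself"
  shows "k \<in> cone_pts P \<Longrightarrow> Poly_Mapping.single k c \<in> ehrhart_ring K P"
  by (auto simp: ehrhart_ring_def)

lemma single_in_omega:
  fixes K :: "'k::field itself"
  shows "k \<in> int_cone_pts P \<Longrightarrow> Poly_Mapping.single k c \<in> canonical_module K P"
  by (auto simp: canonical_module_def)

lemma hom_zero:
  fixes K :: "'k::field itself" and \<phi> :: "(((int^'n) \<times> nat) \<Rightarrow>\<^sub>0 'k) \<Rightarrow> _"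
  assumes "\<phi> \<in> hom_omega K P"
  shows "\<phi> 0 = 0"
proof -
  have "(0::((int^'n) \<times> nat) \<Rightarrow>\<^sub>0 'k) \<in> canonical_module K P" by (simp add: canonical_module_def)
  moreover have "\<forall>v\<in>canonical_module K P. \<forall>w\<in>canonical_module K P. \<phi> (v + w) = \<phi> v + \<phi> w"
    using assms by (simp add: hom_omega_def)
  ultimately have "\<phi> (0 + 0) = \<phi> 0 + \<phi> 0" by blast
  thus ?thesis by simp
qed

lemma hom_single:
  fixes K :: "'k::field itself" and \<phi> :: "(((int^'n) \<times> nat) \<Rightarrow>\<^sub>0 'k) \<Rightarrow> _"
  assumes "\<phi> \<in> hom_omega K P" "v \<in> int_cone_pts P"
  shows "\<phi> (Poly_Mapping.single v d) = Poly_Mapping.single 0 d * \<phi> (Poly_Mapping.single v 1)"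
proof -
  have "Poly_Mapping.single v d = Poly_Mapping.single 0 d * Poly_Mapping.single v (1::'k)"
    by (simp add: mult_single)
  moreover have "Poly_Mapping.single 0 d \<in> ehrhart_ring K P"
    using single_in_ring[where k=0 and c=d and K=K] cone_zero by (simp add: zero_prod_def)
  moreover have "\<phi> (Poly_Mapping.single 0 d * Poly_Mapping.single v 1) = Poly_Mapping.single 0 d * \<phi> (Poly_Mapping.single v 1)"
    using assms(1) \<open>Poly_Mapping.single 0 d \<in> ehrhart_ring K P\<close> single_in_omega[OF assms(2), where c=1 and K=K]
    unfolding hom_omega_def by blast
  ultimately show ?thesis by simp
qed

lemma hom_keys:
  fixes K :: "'k::field itself" and \<phi> :: "(((int^'n) \<times> nat) \<Rightarrow>\<^sub>0 'k) \<Rightarrow> _"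
  assumes hom: "\<phi> \<in> hom_omega K P" and w: "w \<in> canonical_module K P"
  shows "Poly_Mapping.keys (\<phi> w) \<subseteq> (\<Union>v\<in>Poly_Mapping.keys w. Poly_Mapping.keys (\<phi> (Poly_Mapping.single v 1)))"
proof -
  let ?g = "\<lambda>v. Poly_Mapping.single v (Poly_Mapping.lookup w v)"
  have kw: "Poly_Mapping.keys w \<subseteq> int_cone_pts P" using w by (simp add: canonical_module_def)
  have step: "S \<subseteq> Poly_Mapping.keys w \<Longrightarrow> \<phi> (sum ?g S) = (\<Sum>v\<in>S. \<phi> (?g v))" for S
  proof (induction S rule: infinite_finite_induct)
    case (infinite S) thus ?case using hom_zero[OF hom] by simp
  next
    case empty thus ?case using hom_zero[OF hom] by simp
  next
    case (insert a S)
    have "?g a \<in> canonical_module K P" using insert.prems kw by (auto simp: canonical_module_def)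
    moreover have "sum ?g S \<in> canonical_module K P"
    proof -
      have "Poly_Mapping.keys (sum ?g S) \<subseteq> (\<Union>i\<in>S. Poly_Mapping.keys (?g i))" by (rule keys_sum)
      also have "\<dots> \<subseteq> int_cone_pts P" using insert.prems kw by auto
      finally show ?thesis by (simp add: canonical_module_def)
    qed
    ultimately have "\<phi> (?g a + sum ?g S) = \<phi> (?g a) + \<phi> (sum ?g S)" using hom by (simp add: hom_omega_def)
    thus ?case using insert by simp
  qed
  have "\<phi> w = (\<Sum>v\<in>Poly_Mapping.keys w. \<phi> (?g v))"
    using step[of "Poly_Mapping.keys w"] poly_mapping_expand[of w] by simp
  also have "\<dots> = (\<Sum>v\<in>Poly_Mapping.keys w. Poly_Mapping.single 0 (Poly_Mapping.lookup w v) * \<phi> (Poly_Mapping.single v 1))"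
    using hom_single[OF hom] kw by (intro sum.cong) auto
  finally have eq: "\<phi> w = \<dots>" .
  have "Poly_Mapping.keys (\<phi> w) \<subseteq> (\<Union>v\<in>Poly_Mapping.keys w. Poly_Mapping.keys (Poly_Mapping.single 0 (Poly_Mapping.lookup w v) * \<phi> (Poly_Mapping.single v 1)))"
    unfolding eq by (rule keys_sum)
  also have "\<dots> \<subseteq> (\<Union>v\<in>Poly_Mapping.keys w. Poly_Mapping.keys (\<phi> (Poly_Mapping.single v 1)))"
    using keys_single_mult by fastforce
  finally show ?thesis .
qed

lemma hom_shift:
  fixes K :: "'k::field itself" and \<phi> :: "(((int^'n) \<times> nat) \<Rightarrow>\<^sub>0 'k) \<Rightarrow> _"
  assumes hom: "\<phi> \<in> hom_omega K P" and e: "e \<in> int_cone_pts P" and v: "v \<in> int_cone_pts P"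
  shows "Poly_Mapping.single e 1 * \<phi> (Poly_Mapping.single v 1) = Poly_Mapping.single v 1 * \<phi> (Poly_Mapping.single e 1)"
proof -
  have A: "\<forall>r\<in>ehrhart_ring K P. \<forall>w\<in>canonical_module K P. \<phi> (r * w) = r * \<phi> w" using hom by (simp add: hom_omega_def)
  have re: "Poly_Mapping.single e (1::'k) \<in> ehrhart_ring K P" using e int_cone_sub single_in_ring by blast
  have rv: "Poly_Mapping.single v (1::'k) \<in> ehrhart_ring K P" using v int_cone_sub single_in_ring by blast
  have "\<phi> (Poly_Mapping.single e 1 * Poly_Mapping.single v 1) = Poly_Mapping.single e 1 * \<phi> (Poly_Mapping.single v 1)"
    using A re single_in_omega[OF v] by blast
  moreover have "\<phi> (Poly_Mapping.single v 1 * Poly_Mapping.single e 1) = Poly_Mapping.single v 1 * \<phi> (Poly_Mapping.single e 1)"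
    using A rv single_in_omega[OF e] by blast
  moreover have "Poly_Mapping.single e (1::'k) * Poly_Mapping.single v 1 = Poly_Mapping.single v 1 * Poly_Mapping.single e 1"
    by (rule mult.commute)
  ultimately show ?thesis by simp
qed

lemma hom_key_transfer:
  fixes K :: "'k::field itself" and \<phi> :: "(((int^'n) \<times> nat) \<Rightarrow>\<^sub>0 'k) \<Rightarrow> _"
  assumes hom: "\<phi> \<in> hom_omega K P" and e: "e \<in> int_cone_pts P" and v: "v \<in> int_cone_pts P"
    and x: "x \<in> Poly_Mapping.keys (\<phi> (Poly_Mapping.single v 1))"
  shows "\<exists>t\<in>Poly_Mapping.keys (\<phi> (Poly_Mapping.single e 1)). e + x = v + t"
proof -
  have "e + x \<in> Poly_Mapping.keys (Poly_Mapping.single e (1::'k) * \<phi> (Poly_Mapping.single v 1))"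
    using x by (simp add: keys_single_mult_eq)
  also have "\<dots> = Poly_Mapping.keys (Poly_Mapping.single v 1 * \<phi> (Poly_Mapping.single e 1))"
    using hom_shift[OF hom e v] by simp
  also have "\<dots> = (+) v ` Poly_Mapping.keys (\<phi> (Poly_Mapping.single e 1))"
    by (simp add: keys_single_mult_eq)
  finally show ?thesis by blast
qed

lemma hom_keys_cone:
  fixes K :: "'k::field itself" and \<phi> :: "(((int^'n) \<times> nat) \<Rightarrow>\<^sub>0 'k) \<Rightarrow> _"
  assumes "\<phi> \<in> hom_omega K P" "w \<in> canonical_module K P"
  shows "Poly_Mapping.keys (\<phi> w) \<subseteq> cone_pts P"
  using assms by (auto simp: hom_omega_def ehrhart_ring_def)

lemma part3:
  fixes K :: "'k::field itself"
  assumes ng: "nearly_gorenstein K P"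
  shows "P \<inter> lattice_pts = Dec"
proof
  show "Dec \<subseteq> P \<inter> lattice_pts" by (rule dec_sub)
  show "P \<inter> lattice_pts \<subseteq> Dec"
  proof
    fix x assume x: "x \<in> P \<inter> lattice_pts"
    then obtain xi where xi: "x = rvec xi" using lattice_rvec by blast
    define f :: "((int^'n) \<times> nat) \<Rightarrow>\<^sub>0 'k" where "f = Poly_Mapping.single (xi, 1) 1"
    have "(xi, 1) \<in> cone_pts P" using x xi by (auto simp: cone_pts_def)
    hence "f \<in> max_ideal K P" by (simp add: f_def max_ideal_def lookup_single)
    hence "f \<in> trace_omega K P" using ng by (auto simp: nearly_gorenstein_def)
    then obtain l where l: "set l \<subseteq> hom_omega K P \<times> canonical_module K P"
      "f = sum_list (map (\<lambda>(\<phi>, w). \<phi> w) l)" by (auto simp: trace_omega_def)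
    have "Poly_Mapping.lookup f (xi, 1) \<noteq> 0" by (simp add: f_def)
    then obtain p where p: "p \<in> set l" "Poly_Mapping.lookup ((\<lambda>(\<phi>, w). \<phi> w) p) (xi, 1) \<noteq> 0"
      using lookup_sum_list_nz[of "\<lambda>(\<phi>, w). \<phi> w" l "(xi, 1)"] l(2) by blast
    obtain \<phi> w where pw: "p = (\<phi>, w)" by (cases p)
    have hom: "\<phi> \<in> hom_omega K P" and w: "w \<in> canonical_module K P" using l(1) p(1) pw by auto
    have "(xi, 1) \<in> Poly_Mapping.keys (\<phi> w)" using p(2) pw by (simp add: in_keys_iff)
    then obtain v where v: "v \<in> Poly_Mapping.keys w" "(xi, 1) \<in> Poly_Mapping.keys (\<phi> (Poly_Mapping.single v 1))"
      using hom_keys[OF hom w] by blast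
    have vint: "v \<in> int_cone_pts P" using v(1) w by (auto simp: canonical_module_def)
    obtain z0 where z0: "rvec z0 \<in> interior ((\<lambda>v. real cd *\<^sub>R v) ` P)" using cod_exists by blast
    have eint: "(z0, cd) \<in> int_cone_pts P" using z0 cd_ge1 by (simp add: int_cone_pts_def)
    obtain t where t: "t \<in> Poly_Mapping.keys (\<phi> (Poly_Mapping.single (z0, cd) 1))" "(z0, cd) + (xi, 1) = v + t"
      using hom_key_transfer[OF hom eint vint v(2)] by blast
    have tcone: "t \<in> cone_pts P" using hom_keys_cone[OF hom single_in_omega[OF eint]] t(1) by blast
    obtain vx k where vk: "v = (vx, k)" by (cases v)
    obtain tx tk where ttk: "t = (tx, tk)" by (cases t)
    have Q: "\<exists>sx sk. rvec sx \<in> (\<lambda>v. real sk *\<^sub>R v) ` P \<and> wx + tx = z0 + sx \<and> j + tk = cd + sk"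
      if j: "1 \<le> j" "rvec wx \<in> interior ((\<lambda>v. real j *\<^sub>R v) ` P)" for wx j
    proof -
      have wint: "(wx, j) \<in> int_cone_pts P" using j by (simp add: int_cone_pts_def)
      have "t \<in> Poly_Mapping.keys (\<phi> (Poly_Mapping.single (z0, cd) 1))" by (rule t(1))
      have "(wx, j) + t \<in> Poly_Mapping.keys (Poly_Mapping.single (wx, j) (1::'k) * \<phi> (Poly_Mapping.single (z0, cd) 1))"
        using t(1) by (simp add: keys_single_mult_eq)
      also have "\<dots> = Poly_Mapping.keys (Poly_Mapping.single (z0, cd) 1 * \<phi> (Poly_Mapping.single (wx, j) 1))"
        using hom_shift[OF hom eint wint] by simp
      also have "\<dots> = (+) (z0, cd) ` Poly_Mapping.keys (\<phi> (Poly_Mapping.single (wx, j) 1))"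
        by (simp add: keys_single_mult_eq)
      finally obtain s where s: "s \<in> Poly_Mapping.keys (\<phi> (Poly_Mapping.single (wx, j) 1))" "(wx, j) + t = (z0, cd) + s"
        by blast
      have "s \<in> cone_pts P" using hom_keys_cone[OF hom single_in_omega[OF wint]] s(1) by blast
      moreover obtain sx sk where "s = (sx, sk)" by (cases s)
      ultimately show ?thesis using s(2) ttk by (auto simp: cone_pts_def)
    qed
    have "rvec xi \<in> Dec"
    proof (rule part3_geom[OF z0])
      show "1 \<le> k" "rvec vx \<in> interior ((\<lambda>v. real k *\<^sub>R v) ` P)" using vint vk by (auto simp: int_cone_pts_def)
      show "z0 + xi = vx + tx" "cd + 1 = k + tk" using t(2) vk ttk by auto
      show "rvec tx \<in> (\<lambda>v. real tk *\<^sub>R v) ` P" using tcone ttk by (simp add: cone_pts_def)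
      show "\<And>wx j. 1 \<le> j \<Longrightarrow> rvec wx \<in> interior ((\<lambda>v. real j *\<^sub>R v) ` P) \<Longrightarrow>
             (\<exists>sx sk. rvec sx \<in> (\<lambda>v. real sk *\<^sub>R v) ` P \<and> wx + tx = z0 + sx \<and> j + tk = cd + sk)"
        using Q by blast
    qed
    thus "x \<in> Dec" using xi by simp
  qed
qed

end


context latpoly begin

lemma sum_list_ineq:
  assumes "set xs \<subseteq> P" "F facet_of P"
  shows "lfun (nF P F) (sum_list xs) \<ge> - real (length xs) * hF P F"
  using assms(1)
proof (induction xs)
  case Nil thus ?case by (simp add: lfun_def)
next
  case (Cons x xs)
  hence "lfun (nF P F) x \<ge> - hF P F" using nF_props(2)[OF assms(2)] by simp
  moreover have "lfun (nF P F) (sum_list xs) \<ge> - real (length xs) * hF P F" using Cons by simp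
  ultimately show ?case by (simp add: lfun_add algebra_simps)
qed

lemma phi_hom:
  fixes K :: "'k::field itself"
  assumes y: "rvec yi \<in> Rset"
  shows "(Poly_Mapping.map_key ((+) (- yi, cd - 1)) :: (((int^'n) \<times> nat) \<Rightarrow>\<^sub>0 'k) \<Rightarrow> _) \<in> hom_omega K P"
proof -
  define c where "c = (- yi, cd - 1)"
  have inj: "inj ((+) c)" by (simp add: inj_def)
  have ydef: "lfun (nF P F) (rvec yi) \<ge> (real cd - 1) * hF P F - 1" if "F facet_of P" for F
    using y that by (simp add: Rset_def)
  have keydeg: "snd k \<ge> cd" if "k \<in> int_cone_pts P" for k
  proof -
    obtain kx kj where "k = (kx, kj)" by (cases k)
    thus ?thesis using that cod_min by (auto simp: int_cone_pts_def)
  qed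
  have ring: "Poly_Mapping.map_key ((+) c) w \<in> ehrhart_ring K P" if w: "w \<in> canonical_module K P" for w :: "((int^'n) \<times> nat) \<Rightarrow>\<^sub>0 'k"
  proof -
    have "k \<in> cone_pts P" if k: "k \<in> Poly_Mapping.keys (Poly_Mapping.map_key ((+) c) w)" for k
    proof -
      obtain kx kj where kk: "k = (kx, kj)" by (cases k)
      have "c + k \<in> Poly_Mapping.keys w" using k by (simp add: keys_map_key[OF inj])
      hence ck: "c + k \<in> int_cone_pts P" using w by (auto simp: canonical_module_def)
      have cke: "c + k = (- yi + kx, cd - 1 + kj)" by (simp add: c_def kk)
      have j1: "1 \<le> cd - 1 + kj" and int: "rvec (- yi + kx) \<in> interior ((\<lambda>v. real (cd - 1 + kj) *\<^sub>R v) ` P)"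
        using ck cke by (auto simp: int_cone_pts_def)
      have "cd \<le> cd - 1 + kj" using cod_min[OF j1 int] .
      hence kj: "kj \<ge> 1" using cd_ge1 by linarith
      have rj: "real (cd - 1 + kj) = real cd - 1 + real kj" using cd_ge1 by simp
      have "lfun (nF P F) (rvec kx) \<ge> - real kj * hF P F" if F: "F facet_of P" for F
      proof -
        have "lfun (nF P F) (rvec (- yi + kx)) \<ge> 1 - real (cd - 1 + kj) * hF P F"
          using interior_int[OF j1 int F] .
        moreover have "rvec (- yi + kx) = rvec kx - rvec yi" by (simp add: rvec_def vec_eq_iff)
        ultimately show ?thesis using ydef[OF F] rj by (simp add: lfun_diff algebra_simps)
      qed
      hence "rvec kx \<in> (\<lambda>v. real kj *\<^sub>R v) ` P" using scaled_rep[of "real kj"] kj by auto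
      thus ?thesis by (simp add: kk cone_pts_def)
    qed
    thus ?thesis by (auto simp: ehrhart_ring_def)
  qed
  have lin: "Poly_Mapping.map_key ((+) c) (r * w) = r * Poly_Mapping.map_key ((+) c) w"
    if w: "w \<in> canonical_module K P" for r w :: "((int^'n) \<times> nat) \<Rightarrow>\<^sub>0 'k"
  proof -
    have "Poly_Mapping.keys w \<subseteq> range ((+) c)"
    proof
      fix k assume "k \<in> Poly_Mapping.keys w"
      hence kint: "k \<in> int_cone_pts P" using w by (auto simp: canonical_module_def)
      obtain kx kj where kk: "k = (kx, kj)" by (cases k)
      have "kj \<ge> cd" using keydeg[OF kint] kk by simp
      hence "k = c + (yi + kx, kj - (cd - 1))" using kk by (simp add: c_def)
      thus "k \<in> range ((+) c)" by blast
    qed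
    hence wb: "Poly_Mapping.single c 1 * Poly_Mapping.map_key ((+) c) w = w" by (rule shift_back)
    have "r * w = Poly_Mapping.single c 1 * (r * Poly_Mapping.map_key ((+) c) w)"
      by (subst wb[symmetric]) (simp add: ac_simps)
    thus ?thesis by (simp add: map_key_shift)
  qed
  show ?thesis unfolding hom_omega_def c_def[symmetric]
    using ring lin by (simp add: map_key_plus[OF inj])
qed

lemma trace_zero:
  fixes K :: "'k::field itself"
  shows "(0 :: ((int^'n) \<times> nat) \<Rightarrow>\<^sub>0 'k) \<in> trace_omega K P"
  unfolding trace_omega_def by (rule CollectI, rule exI[of _ "[]"]) simp

lemma trace_add:
  fixes K :: "'k::field itself" and f g :: "((int^'n) \<times> nat) \<Rightarrow>\<^sub>0 'k"
  assumes "f \<in> trace_omega K P" "g \<in> trace_omega K P"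
  shows "f + g \<in> trace_omega K P"
proof -
  obtain l1 where l1: "f = sum_list (map (\<lambda>(\<phi>, w). \<phi> w) l1)" "set l1 \<subseteq> hom_omega K P \<times> canonical_module K P"
    using assms(1) by (auto simp: trace_omega_def)
  obtain l2 where l2: "g = sum_list (map (\<lambda>(\<phi>, w). \<phi> w) l2)" "set l2 \<subseteq> hom_omega K P \<times> canonical_module K P"
    using assms(2) by (auto simp: trace_omega_def)
  have "f + g = sum_list (map (\<lambda>(\<phi>, w). \<phi> w) (l1 @ l2))" using l1 l2 by simp
  moreover have "set (l1 @ l2) \<subseteq> hom_omega K P \<times> canonical_module K P" using l1 l2 by auto
  ultimately show ?thesis unfolding trace_omega_def by blast
qed

lemma trace_sum:
  fixes K :: "'k::field itself" and g :: "'a \<Rightarrow> ((int^'n) \<times> nat) \<Rightarrow>\<^sub>0 'k"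
  assumes "\<And>a. a \<in> S \<Longrightarrow> g a \<in> trace_omega K P"
  shows "sum g S \<in> trace_omega K P"
  using assms
proof (induction S rule: infinite_finite_induct)
  case (infinite S) thus ?case using trace_zero by simp
next
  case empty thus ?case using trace_zero by simp
next
  case (insert a S)
  have ga: "g a \<in> trace_omega K P" using insert.prems by simp
  have gS: "sum g S \<in> trace_omega K P" using insert.IH insert.prems by simp
  have "sum g (insert a S) = g a + sum g S" using insert.hyps by simp
  thus ?case using trace_add[OF ga gS] by simp
qed

lemma part4:
  fixes K :: "'k::field itself"
  assumes idp: "IDP P" and dec: "P \<inter> lattice_pts = Dec"
  shows "nearly_gorenstein K P"
  unfolding nearly_gorenstein_def
proof
  fix f :: "((int^'n) \<times> nat) \<Rightarrow>\<^sub>0 'k" assume f: "f \<in> max_ideal K P"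
  have mono: "Poly_Mapping.single k (Poly_Mapping.lookup f k) \<in> trace_omega K P" if k: "k \<in> Poly_Mapping.keys f" for k
  proof -
    obtain xi j where kk: "k = (xi, j)" by (cases k)
    have kc: "k \<in> cone_pts P" using f k by (auto simp: max_ideal_def)
    hence xj: "rvec xi \<in> (\<lambda>v. real j *\<^sub>R v) ` P" by (simp add: kk cone_pts_def)
    have "k \<noteq> (0, 0)" using f k by (auto simp: max_ideal_def in_keys_iff)
    have j1: "j \<ge> 1"
    proof (rule ccontr)
      assume "\<not> j \<ge> 1"
      hence "j = 0" by simp
      hence "rvec xi = 0" using xj scaled_zero by simp
      hence "xi = 0" using rvec_zero_iff by blast
      thus False using \<open>k \<noteq> (0, 0)\<close> kk \<open>j = 0\<close> by simp
    qed
    obtain xs where xs: "length xs = j" "set xs \<subseteq> P \<inter> lattice_pts" "sum_list xs = rvec xi"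
      using idp j1 xj rvec_lattice unfolding IDP_def by blast
    obtain x1 rest where xs1: "xs = x1 # rest" using xs(1) j1 by (cases xs) auto
    have "x1 \<in> Dec" using xs(2) xs1 dec by auto
    then obtain x' y where x'y: "x1 = x' + y" "x' \<in> interior ((\<lambda>v. real cd *\<^sub>R v) ` P) \<inter> lattice_pts"
      "y \<in> Rset" using floor_lattice rem_lattice by blast
    obtain yi where yi: "y = rvec yi" using x'y(3) lattice_rvec by (auto simp: Rset_def)
    obtain x'i where x'i: "x' = rvec x'i" using x'y(2) lattice_rvec by blast
    define wx where "wx = xi - yi"
    have "rvec xi = x' + rvec yi + sum_list rest" using xs(3) xs1 x'y(1) yi by simp
    hence rwx: "rvec wx = x' + sum_list rest" by (simp add: wx_def algebra_simps)
    have rl: "length rest = j - 1" using xs(1) xs1 by simp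
    have deg: "real (cd + j - 1) = real cd + real j - 1" using cd_ge1 j1 by simp
    have wgt: "lfun (nF P F) (rvec wx) > - real (cd + j - 1) * hF P F" if F: "F facet_of P" for F
    proof -
      have "lfun (nF P F) x' > - real cd * hF P F"
        using x'y(2) interior_scaled[of "real cd"] cd_ge1 F by auto
      moreover have "lfun (nF P F) (sum_list rest) \<ge> - real (j - 1) * hF P F"
        using sum_list_ineq[of rest F] xs(2) xs1 F rl by auto
      moreover have "real (j - 1) = real j - 1" using j1 by simp
      ultimately show ?thesis using deg by (simp add: rwx lfun_add algebra_simps)
    qed
    have pos: "real (cd + j - 1) > 0" using cd_ge1 j1 by simp
    have wint: "rvec wx \<in> interior ((\<lambda>v. real (cd + j - 1) *\<^sub>R v) ` P)"
      unfolding interior_scaled[OF pos] using wgt by blast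
    have wcone: "(wx, cd + j - 1) \<in> int_cone_pts P" using wint cd_ge1 j1 by (simp add: int_cone_pts_def)
    define w :: "((int^'n) \<times> nat) \<Rightarrow>\<^sub>0 'k" where "w = Poly_Mapping.single (wx, cd + j - 1) (Poly_Mapping.lookup f k)"
    have wom: "w \<in> canonical_module K P" using wcone by (simp add: w_def canonical_module_def)
    let ?\<phi> = "(Poly_Mapping.map_key ((+) (- yi, cd - 1)) :: (((int^'n) \<times> nat) \<Rightarrow>\<^sub>0 'k) \<Rightarrow> _)"
    have hom: "?\<phi> \<in> hom_omega K P" using phi_hom x'y(3) yi by blast
    have inj: "inj ((+) (- yi, cd - 1))" by (simp add: inj_def)
    have "(wx, cd + j - 1) = (- yi, cd - 1) + k" using cd_ge1 j1 by (simp add: kk wx_def)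
    hence "?\<phi> w = Poly_Mapping.single k (Poly_Mapping.lookup f k)"
      by (simp add: w_def map_key_single[OF inj])
    moreover have "?\<phi> w \<in> trace_omega K P"
      unfolding trace_omega_def
      by (rule CollectI, rule exI[of _ "[(?\<phi>, w)]"]) (use hom wom in simp)
    ultimately show ?thesis by simp
  qed
  have "f = (\<Sum>k\<in>Poly_Mapping.keys f. Poly_Mapping.single k (Poly_Mapping.lookup f k))" by (rule poly_mapping_expand)
  also have "\<dots> \<in> trace_omega K P" by (rule trace_sum) (rule mono)
  finally show "f \<in> trace_omega K P" .
qed

end

theorem lemma3p4:
  fixes P :: "(real^'n) set" and K :: "'k::field itself"
  assumes "infinite (UNIV :: 'k set)"
    and "lattice_polytope P"
    and "interior P \<noteq> {}"
  shows "floor_poly ((\<lambda>v. real (codegree P) *\<^sub>R v) ` P) \<subseteq>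
           {x. \<forall>F. F facet_of P \<longrightarrow> lfun (nF P F) x \<ge> 1 - real (codegree P) * hF P F}
       \<and> remainder_poly P \<subseteq>
           {x. \<forall>F. F facet_of P \<longrightarrow> lfun (nF P F) x \<ge> (real (codegree P) - 1) * hF P F - 1}
       \<and> (nearly_gorenstein K P \<longrightarrow>
           P \<inter> lattice_pts = {x + y | x y. x \<in> floor_poly ((\<lambda>v. real (codegree P) *\<^sub>R v) ` P) \<inter> lattice_pts
                                          \<and> y \<in> remainder_poly P \<inter> lattice_pts})
       \<and> (IDP P \<and>
          P \<inter> lattice_pts = {x + y | x y. x \<in> floor_poly ((\<lambda>v. real (codegree P) *\<^sub>R v) ` P) \<inter> lattice_pts
                                          \<and> y \<in> remainder_poly P \<inter> lattice_pts} \<longrightarrow>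
          nearly_gorenstein K P)"
proof -
  interpret latpoly P using assms(2,3) by unfold_locales
  show ?thesis using part1 part2 part3[of K] part4[of K] by blast
qed

end
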